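(* Let $x_{1:n}\in\mathcal X^n$ ($n\ge1$) have used alphabet size $m$ and counts $n_j$. Let $\beta^*:=m/\ln\frac nm$ if $m<n$, and if $m=n$ let $\beta^*=\infty$, where $S^\infty$ is defined by $S^\infty(x_{t+1}=i\mid x_{1:t})=w^t_i$ if $n^t_i=0$ and $0$ if $n^t_i>0$. Then $$R^{\beta^*}_S(x_{1:n}) \le \mathrm{CL}_w(\mathcal A) - \big(m-\tfrac12\big)\ln m + \sum_{j\in\mathcal A}\tfrac12\ln n_j - \tfrac12\ln n + m\ln\ln\frac{e\,n}{m} + 0.56\,m + 0.082 .$$
   Context: Let $\mathcal X$ be a finite base alphabet. For $x_{1:n}\in\mathcal X^n$, let $n_i$ be the number of occurrences of $i$ in $x_{1:n}$, $\mathcal A=\{x_1,\dots,x_n\}$, $m=|\mathcal A|$. For $0\le t\le n$ let $\mathcal A_t=\{x_1,\dots,x_t\}$ ($\mathcal A_0=\emptyset$), $n^t_i$ the number of occurrences of $i$ in $x_{1:t}$. New-symbol weights: for each $t$ and $i\in\mathcal X\setminus\mathcal A_t$ a number $w^t_i>0$ with $\sum_{k\in\mathcal X\setminus\mathcal A_t}w^t_k\le1$. For constant $\beta>0$, $S^\beta(x_{t+1}=i\mid x_{1:t})=n^t_i/(t+\beta)$ if $n^t_i>0$ and $\beta w^t_i/(t+\beta)$ if $n^t_i=0$; $S^\beta(x_{1:n})=\prod_{t=0}^{n-1}S^\beta(x_{t+1}\mid x_{1:t})$. $\mathrm{CL}_w(\mathcal A):=\sum_{t\in\{0,\dots,n-1\}:\,x_{t+1}\notin\mathcal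 A_t}\ln(1/w^t_{x_{t+1}})$. Redundancy $R^\beta_S(x_{1:n}):=\ln\big(n^{-n}\prod_{j\in\mathcal A}n_j^{n_j}\big)-\ln S^\beta(x_{1:n})$. Natural logarithms; $e$ is Euler's number. *)

theory Defs
  imports Complex_Main
begin

text \<open>The sequence x_{1:n} is modelled by x :: nat => 'a, using the entries x 1, ..., x n.
  The new-symbol weights are w t i (w^t_i).\<close>

definition seen :: "(nat \<Rightarrow> 'a) \<Rightarrow> nat \<Rightarrow> 'a set" where
  "seen x t = x ` {1..t}"

definition cnt :: "(nat \<Rightarrow> 'a) \<Rightarrow> nat \<Rightarrow> 'a \<Rightarrow> nat" where
  "cnt x t i = card {s \<in> {1..t}. x s = i}"

definition S_cond :: "real \<Rightarrow> (nat \<Rightarrow> 'a \<Rightarrow> real) \<Rightarrow> (nat \<Rightarrow> 'a) \<Rightarrow> nat \<Rightarrow> 'a \<Rightarrow> real" where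
  "S_cond \<beta> w x t i =
     (if cnt x t i > 0 then real (cnt x t i) / (real t + \<beta>) else \<beta> * w t i / (real t + \<beta>))"

definition S_seq :: "real \<Rightarrow> (nat \<Rightarrow> 'a \<Rightarrow> real) \<Rightarrow> (nat \<Rightarrow> 'a) \<Rightarrow> nat \<Rightarrow> real" where
  "S_seq \<beta> w x n = (\<Prod>t<n. S_cond \<beta> w x t (x (t + 1)))"

definition S_inf_cond :: "(nat \<Rightarrow> 'a \<Rightarrow> real) \<Rightarrow> (nat \<Rightarrow> 'a) \<Rightarrow> nat \<Rightarrow> 'a \<Rightarrow> real" where
  "S_inf_cond w x t i = (if cnt x t i = 0 then w t i else 0)"

definition S_inf_seq :: "(nat \<Rightarrow> 'a \<Rightarrow> real) \<Rightarrow> (nat \<Rightarrow> 'a) \<Rightarrow> nat \<Rightarrow> real" where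
  "S_inf_seq w x n = (\<Prod>t<n. S_inf_cond w x t (x (t + 1)))"

definition redundancy :: "(nat \<Rightarrow> 'a) \<Rightarrow> nat \<Rightarrow> real \<Rightarrow> real" where
  "redundancy x n P =
     ln (real n powi (- int n) * (\<Prod>j\<in>seen x n. real (cnt x n j) ^ cnt x n j)) - ln P"

definition CL :: "(nat \<Rightarrow> 'a \<Rightarrow> real) \<Rightarrow> (nat \<Rightarrow> 'a) \<Rightarrow> nat \<Rightarrow> real" where
  "CL w x n = (\<Sum>t\<in>{t. t < n \<and> x (t + 1) \<notin> seen x t}. ln (1 / w t (x (t + 1))))"

end

theory Submission
  imports Defs
begin


definition atlo :: "real \<Rightarrow> real" where
  "atlo x = 2*(x + x^3/3 + x^5/5 + x^7/7 + x^9/9 + x^11/11)"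
definition athi :: "real \<Rightarrow> real" where
  "athi x = 2*(x + x^3/3 + x^5/5 + x^7/7 + x^9/9) + 2*x^11/(11*(1-x^2))"

lemma atlo_le: assumes "0 \<le> x" "x < 1" shows "atlo x \<le> ln (1+x) - ln (1-x)"
proof -
  let ?f = "\<lambda>x. ln (1+x) - ln (1-x) - atlo x"
  have "?f 0 \<le> ?f x"
  proof (rule DERIV_nonneg_imp_nondecreasing[OF assms(1)])
    fix t assume t: "0 \<le> t" "t \<le> x"
    hence t1: "t < 1" using assms by simp
    have d: "DERIV ?f t :> (1/(1+t) + 1/(1-t) - 2*(1+t^2+t^4+t^6+t^8+t^10))"
      unfolding atlo_def
      by (rule derivative_eq_intros refl | use t t1 in simp)+
    have "1/(1+t) + 1/(1-t) - 2*(1+t^2+t^4+t^6+t^8+t^10) = 2*t^12/((1+t)*(1-t))"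
    proof -
      have "1+t \<noteq> 0" "1-t \<noteq> 0" "1 - t*t \<noteq> 0" proof -
        have "t*t \<le> t*1" using t t1 by (intro mult_left_mono) auto
        thus "1+t \<noteq> 0" "1-t \<noteq> 0" "1 - t*t \<noteq> 0" using t t1 by auto
      qed
      thus ?thesis by (simp add: field_simps) algebra
    qed
    moreover have "0 \<le> 2*t^12/((1+t)*(1-t))" using t t1 by simp
    ultimately show "\<exists>y. DERIV ?f t :> y \<and> 0 \<le> y" using d by auto
  qed
  thus ?thesis by (simp add: atlo_def)
qed

lemma athi_ge: assumes "0 \<le> x" "x < 1" shows "ln (1+x) - ln (1-x) \<le> athi x"
proof -
  let ?f = "\<lambda>x. athi x - (ln (1+x) - ln (1-x))"
  have "?f 0 \<le> ?f x"
  proof (rule DERIV_nonneg_imp_nondecreasing[OF assms(1)])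
    fix t assume t: "0 \<le> t" "t \<le> x"
    hence t1: "t < 1" using assms by simp
    have tt: "t*t \<le> t*1" using t t1 by (intro mult_left_mono) auto
    have nz: "1+t \<noteq> 0" "1-t \<noteq> 0" "1 - t*t \<noteq> 0" "1 - t^2 \<noteq> 0" "11 - 11*t^2 \<noteq> 0" "11 - 11*(t*t) \<noteq> 0"
      using t t1 tt by (auto simp: power2_eq_square)
    have d0: "DERIV ?f t :> 2*(1 + t^2 + t^4 + t^6 + t^8) + (22*t^10 * (11*(1-t^2)) + 2*t^11*(22*t))/((11*(1-t^2))^2) - (1/(1+t) + 1/(1-t))"
      unfolding athi_def
      apply (rule derivative_eq_intros refl | use nz t t1 in force)+
      by (simp add: power2_eq_square)
    have eq: "2*(1 + t^2 + t^4 + t^6 + t^8) + (22*t^10 * (11*(1-t^2)) + 2*t^11*(22*t))/((11*(1-t^2))^2) - (1/(1+t) + 1/(1-t)) = 4*t^12/(11*(1-t^2)^2)"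
    proof -
      obtain d where hd: "d = 1 - t^2" by blast
      have dnz: "d \<noteq> 0" using nz hd by simp
      have h1: "1/(1+t) + 1/(1-t) = 2/d" using nz hd by (simp add: field_simps power2_eq_square)
      have "2*(1 + t^2 + t^4 + t^6 + t^8) + (22*t^10 * (11*d) + 2*t^11*(22*t))/((11*d)^2) - 2/d = 4*t^12/(11*d^2)"
        using dnz apply (simp add: field_simps power2_eq_square)
        unfolding hd by algebra
      thus ?thesis using h1 hd by simp
    qed
    have d: "DERIV ?f t :> 4*t^12/(11*(1-t^2)^2)" using d0 eq by simp
    moreover have "0 \<le> 4*t^12/(11*(1-t^2)^2)" by simp
    ultimately show "\<exists>y. DERIV ?f t :> y \<and> 0 \<le> y" by auto
  qed
  thus ?thesis by (simp add: athi_def)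
qed

lemma ln_at: assumes "1 \<le> p" shows "atlo ((p-1)/(p+1)) \<le> ln p" "ln p \<le> athi ((p-1)/(p+1))"
proof -
  let ?x = "(p-1)/(p+1)"
  have x0: "0 \<le> ?x" "?x < 1" using assms by (auto simp: field_simps)
  have "1 + ?x = 2*p/(p+1)" "1 - ?x = 2/(p+1)" using assms by (auto simp: field_simps)
  hence "ln (1 + ?x) - ln (1 - ?x) = ln p" using assms by (simp add: ln_div ln_mult)
  thus "atlo ?x \<le> ln p" "ln p \<le> athi ?x" using atlo_le[OF x0] athi_ge[OF x0] by auto
qed

definition lnlo :: "nat \<Rightarrow> real \<Rightarrow> real" where
  "lnlo k p = real k * atlo (1/3) + atlo ((p/2^k - 1)/(p/2^k + 1))"
definition lnhi :: "nat \<Rightarrow> real \<Rightarrow> real" where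
  "lnhi k p = real k * athi (1/3) + athi ((p/2^k - 1)/(p/2^k + 1))"

lemma ln_bounds: assumes "2^k \<le> p" shows "lnlo k p \<le> ln p" "ln p \<le> lnhi k p"
proof -
  have l2: "atlo (1/3) \<le> ln 2" "ln 2 \<le> athi (1/3)" using ln_at[of 2] by simp_all
  have s1: "1 \<le> p/2^k" using assms by simp
  have p0: "p > 0" using assms by (smt (verit) zero_less_power)
  have "ln p = real k * ln 2 + ln (p/2^k)" using p0 by (simp add: ln_div ln_realpow)
  moreover have "real k * atlo (1/3) \<le> real k * ln 2" "real k * ln 2 \<le> real k * athi (1/3)"
    using l2 by (simp_all add: mult_left_mono)
  ultimately show "lnlo k p \<le> ln p" "ln p \<le> lnhi k p"
    using ln_at[OF s1] unfolding lnlo_def lnhi_def by linarith+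
qed



definition c0 :: real where "c0 = 56/100 - 1/12"
definition hfun :: "real \<Rightarrow> real" where
  "hfun L = c0 + exp (-L)/12 + ln (1+L) - (1+1/L)*ln L - (1 + L*exp L)*ln (1 + 1/(L*exp L))/L"

lemma M1: fixes x y :: real assumes "0 < x" "x \<le> y" shows "(1+1/x)*ln x \<le> (1+1/y)*ln y"
proof (rule DERIV_nonneg_imp_nondecreasing[OF assms(2)])
  fix t assume t: "x \<le> t" "t \<le> y"
  hence t0: "t > 0" using assms by simp
  have d: "DERIV (\<lambda>t. (1+1/t)*ln t) t :> (-(1/t^2))*ln t + (1+1/t)*(1/t)"
    by (rule derivative_eq_intros refl | use t0 in \<open>force simp: power2_eq_square\<close>)+
  have "ln t \<le> t - 1" using ln_le_minus_one t0 by simp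
  hence "(-(1/t^2))*ln t + (1+1/t)*(1/t) = (t + 1 - ln t)/t^2" using t0
    by (simp add: field_simps power2_eq_square)
  moreover have "0 \<le> (t + 1 - ln t)/t^2" using \<open>ln t \<le> t - 1\<close> by simp
  ultimately show "\<exists>y. DERIV (\<lambda>t. (1+1/t)*ln t) t :> y \<and> 0 \<le> y" using d by auto
qed

lemma M2: fixes x y :: real assumes "0 < x" "x \<le> y" shows "(1+y)*ln (1+1/y) \<le> (1+x)*ln (1+1/x)"
proof -
  have "(\<lambda>z. (1+z)*(ln (1+z) - ln z)) x \<ge> (\<lambda>z. (1+z)*(ln (1+z) - ln z)) y"
  proof (rule DERIV_nonpos_imp_nonincreasing[OF assms(2)])
    fix t assume t: "x \<le> t" "t \<le> y"
    hence t0: "t > 0" using assms by simp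
    have d: "DERIV (\<lambda>z. (1+z)*(ln (1+z) - ln z)) t :> (ln (1+t) - ln t) + (1+t)*(1/(1+t) - 1/t)"
      apply (rule derivative_eq_intros refl | use t0 in simp)+
      done
    have e: "(ln (1+t) - ln t) + (1+t)*(1/(1+t) - 1/t) = ln (1 + 1/t) - 1/t"
    proof -
      have tt: "t + t*t \<noteq> 0" using t0 by (smt (verit) mult_pos_pos)
      have a: "(1+t)*(1/(1+t) - 1/t) = -1/t" using t0 tt by (simp add: field_simps)
      have "1 + 1/t = (1+t)/t" using t0 by (simp add: field_simps)
      hence "ln (1 + 1/t) = ln (1+t) - ln t" using t0 by (simp add: ln_div)
      thus ?thesis using a by simp
    qed
    have "ln (1 + 1/t) \<le> 1/t" using ln_add_one_self_le_self[of "1/t"] t0 by simp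
    thus "\<exists>yy. DERIV (\<lambda>z. (1+z)*(ln (1+z) - ln z)) t :> yy \<and> yy \<le> 0" using d e by auto
  qed
  moreover have "ln (1 + 1/z) = ln (1+z) - ln z" if "z > 0" for z :: real
  proof -
    have "1 + 1/z = (1+z)/z" using that by (simp add: field_simps)
    thus ?thesis using that by (simp add: ln_div)
  qed
  ultimately show ?thesis using assms by simp
qed

lemma exp_le_from_ln: "2^k \<le> FB \<Longrightarrow> b \<le> lnlo k FB \<Longrightarrow> exp b \<le> FB"
  using ln_bounds(1)[of k FB] by (smt (verit) exp_le_cancel_iff exp_ln zero_less_power)
lemma exp_ge_from_ln: "2^k \<le> EA \<Longrightarrow> lnhi k EA \<le> a \<Longrightarrow> EA \<le> exp a"
  using ln_bounds(2)[of k EA] by (smt (verit) exp_le_cancel_iff exp_ln zero_less_power)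

lemma F1_master:
  assumes "0 < a" "a \<le> L" "L \<le> b" "exp b \<le> FB" "LA \<le> ln (1+a)" "ln b \<le> UB"
    "EA \<le> exp a" "0 < EA" "ln (1 + 1/(a*EA)) \<le> UQ"
    "0 \<le> c0 + 1/(12*FB) + LA - (1+1/b)*UB - (1+a*EA)*UQ/a"
  shows "0 \<le> hfun L"
proof -
  have L0: "L > 0" using assms by simp
  have "exp b > 0" by simp
  have e1: "1/FB \<le> exp (-L)"
  proof -
    have "1/FB \<le> 1/exp b" using assms(4) by (simp add: frac_le)
    also have "\<dots> = exp (-b)" by (simp add: exp_minus field_simps)
    also have "\<dots> \<le> exp (-L)" using assms(3) by simp
    finally show ?thesis .
  qed
  have e2: "LA \<le> ln (1+L)" using assms(5) assms(1,2) by (smt (verit) ln_le_cancel_iff)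
  have e3: "(1+1/L)*ln L \<le> (1+1/b)*UB"
  proof -
    have "(1+1/L)*ln L \<le> (1+1/b)*ln b" using M1[OF L0 assms(3)] .
    also have "\<dots> \<le> (1+1/b)*UB" using assms(6) assms(1-3) by (intro mult_left_mono) auto
    finally show ?thesis .
  qed
  define z where "z = L * exp L"
  have "EA \<le> exp L" using assms(2,7) by (meson exp_le_cancel_iff order.trans)
  hence za: "a*EA \<le> z" unfolding z_def using assms(2,7,8,1) by (intro mult_mono) auto
  have zpos: "0 < a*EA" using assms by simp
  have e4: "(1+z)*ln (1+1/z)/L \<le> (1+a*EA)*UQ/a"
  proof -
    have g: "(1+z)*ln (1+1/z) \<le> (1+a*EA)*ln (1+1/(a*EA))" using M2[OF zpos za] .
    have g0: "0 \<le> (1+z)*ln (1+1/z)" using zpos za by simp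
    have "(1+z)*ln (1+1/z)/L \<le> (1+z)*ln (1+1/z)/a"
      using g0 assms(1,2) by (intro divide_left_mono) auto
    also have "\<dots> \<le> (1+a*EA)*ln (1+1/(a*EA))/a" using g assms(1) by (intro divide_right_mono) auto
    also have "\<dots> \<le> (1+a*EA)*UQ/a" using assms(9,1) zpos by (intro divide_right_mono mult_left_mono) auto
    finally show ?thesis .
  qed
  have "hfun L = c0 + exp (-L)/12 + ln (1+L) - (1+1/L)*ln L - (1+z)*ln (1+1/z)/L"
    unfolding hfun_def z_def by simp
  thus ?thesis using e1 e2 e3 e4 assms(10) by linarith
qed

lemma hfun_alt: assumes "L > 0"
  shows "hfun L = 1 + c0 + exp (-L)/12 + ln (1+L) + (exp L - 1)*ln L + L*exp L
                  - (1 + L*exp L)*ln (1 + L*exp L)/L"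
proof -
  define z where "z = L * exp L"
  have z0: "z > 0" using assms unfolding z_def by simp
  have "1 + 1/z = (1+z)/z" using z0 by (simp add: field_simps)
  moreover have "1 + z > 0" using z0 by simp
  ultimately have l1: "ln (1+1/z) = ln (1+z) - ln L - L" using z0 assms
    by (simp add: ln_div z_def ln_mult)
  have "(1+z)*ln (1+1/z)/L = (1+z)*ln(1+z)/L - (1/L + exp L)*ln L - (1+z)"
    unfolding l1 using assms by (simp add: z_def field_simps)
  hence "hfun L = c0 + exp (-L)/12 + ln (1+L) - (1+1/L)*ln L - ((1+z)*ln(1+z)/L - (1/L + exp L)*ln L - (1+z))"
    unfolding hfun_def z_def by simp
  also have "\<dots> = 1 + c0 + exp (-L)/12 + ln (1+L) + (exp L - 1)*ln L + z - (1+z)*ln(1+z)/L"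
    by (simp add: algebra_simps)
  finally show ?thesis unfolding z_def .
qed

lemma F2_master:
  assumes "0 < a" "a \<le> L" "L \<le> b" "b \<le> 1" "exp b \<le> FB" "LA \<le> ln (1+a)"
    "EA \<le> exp a" "LNA \<le> ln a" "ln (1 + b*FB) \<le> UZ"
    "0 \<le> 1 + c0 + 1/(12*FB) + LA + (FB-1)*LNA + a*EA - (1+b*FB)*UZ/a" "0 < EA"
  shows "0 \<le> hfun L"
proof -
  have L0: "L > 0" using assms by simp
  have e1: "1/FB \<le> exp (-L)"
  proof -
    have "1/FB \<le> 1/exp b" using assms(5) by (simp add: frac_le)
    also have "\<dots> = exp (-b)" by (simp add: exp_minus field_simps)
    also have "\<dots> \<le> exp (-L)" using assms(3) by simp
    finally show ?thesis .
  qed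
  have e2: "LA \<le> ln (1+L)" using assms(6) assms(1,2) by (smt (verit) ln_le_cancel_iff)
  have lnL: "LNA \<le> ln L" "ln L \<le> 0" using assms(8) assms(1-4) by (smt (verit) ln_le_cancel_iff, simp)
  have LNA0: "LNA \<le> 0" using lnL by simp
  have "exp L \<le> exp b" using assms(3) by simp
  hence eLFB: "exp L \<le> FB" using assms(5) by linarith
  hence eL: "0 \<le> exp L - 1" "exp L - 1 \<le> FB - 1" using L0 by (auto simp: one_le_exp_iff)
  have e3: "(FB-1)*LNA \<le> (exp L - 1)*ln L"
  proof -
    have "(FB-1)*LNA \<le> (exp L - 1)*LNA" using eL LNA0 by (intro mult_right_mono_neg) auto
    also have "\<dots> \<le> (exp L - 1)*ln L" using eL lnL by (intro mult_left_mono) auto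
    finally show ?thesis .
  qed
  have "EA \<le> exp L" using assms(2,7) by (meson exp_le_cancel_iff order.trans)
  hence e4: "a*EA \<le> L*exp L" using assms(2,7,1,11) by (intro mult_mono) auto
  have zb: "L*exp L \<le> b*FB" using assms(3) eLFB L0 by (intro mult_mono) auto
  have e5: "(1 + L*exp L)*ln (1 + L*exp L)/L \<le> (1+b*FB)*UZ/a"
  proof -
    have z0: "0 \<le> L*exp L" using L0 by simp
    have "ln (1 + L*exp L) \<le> ln (1+b*FB)" using zb z0 by simp
    hence "ln (1 + L*exp L) \<le> UZ" using assms(9) by linarith
    hence g: "(1 + L*exp L)*ln (1 + L*exp L) \<le> (1+b*FB)*UZ"
      using assms(9) z0 zb by (intro mult_mono) auto
    have g0: "0 \<le> (1 + L*exp L)*ln (1 + L*exp L)" using z0 by simp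
    have "(1 + L*exp L)*ln (1 + L*exp L)/L \<le> (1 + L*exp L)*ln (1 + L*exp L)/a"
      using g0 assms(1,2) by (intro divide_left_mono) auto
    also have "\<dots> \<le> (1+b*FB)*UZ/a" using g assms(1) by (intro divide_right_mono) auto
    finally show ?thesis .
  qed
  show ?thesis unfolding hfun_alt[OF L0] using e1 e2 e3 e4 e5 assms(10) by linarith
qed

lemma lnlo_le: "2^k \<le> p \<Longrightarrow> LA \<le> lnlo k p \<Longrightarrow> LA \<le> ln p"
  using ln_bounds(1)[of k p] by linarith
lemma lnhi_ge: "2^k \<le> p \<Longrightarrow> lnhi k p \<le> U \<Longrightarrow> ln p \<le> U"
  using ln_bounds(2)[of k p] by linarith
lemma ln_inv_le: "0 < p \<Longrightarrow> 2^k \<le> 1/p \<Longrightarrow> - lnlo k (1/p) \<le> U \<Longrightarrow> ln p \<le> U"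
  using ln_bounds(1)[of k "1/p"] by (simp add: ln_div)
lemma ln_inv_ge: "0 < p \<Longrightarrow> 2^k \<le> 1/p \<Longrightarrow> LNA \<le> - lnhi k (1/p) \<Longrightarrow> LNA \<le> ln p"
  using ln_bounds(2)[of k "1/p"] by (simp add: ln_div)

lemmas numdefs = lnlo_def lnhi_def atlo_def athi_def power_divide c0_def

definition L2lo :: real where "L2lo = 6931470737/10000000000"
definition L2hi :: real where "L2hi = 6931472021/10000000000"

lemma L2: "L2lo \<le> ln 2" "ln 2 \<le> L2hi"
proof -
  have "atlo (1/3) \<le> ln 2" "ln 2 \<le> athi (1/3)" using ln_at[of 2] by simp_all
  moreover have "L2lo \<le> atlo (1/3)" "athi (1/3) \<le> L2hi"
    by (simp_all add: L2lo_def L2hi_def atlo_def athi_def power_divide)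
  ultimately show "L2lo \<le> ln 2" "ln 2 \<le> L2hi" by linarith+
qed

lemma lnP: assumes "0 \<le> x" "x < 1"
  shows "real k * L2lo + atlo x \<le> ln (2^k*(1+x)/(1-x))" "ln (2^k*(1+x)/(1-x)) \<le> real k * L2hi + athi x"
proof -
  have e: "ln (2^k*(1+x)/(1-x)) = real k * ln 2 + (ln (1+x) - ln (1-x))"
    using assms by (simp add: ln_div ln_mult ln_realpow)
  have "real k * L2lo \<le> real k * ln 2" "real k * ln 2 \<le> real k * L2hi"
    using L2 by (simp_all add: mult_left_mono)
  thus "real k * L2lo + atlo x \<le> ln (2^k*(1+x)/(1-x))" "ln (2^k*(1+x)/(1-x)) \<le> real k * L2hi + athi x"
    unfolding e using atlo_le[OF assms] athi_ge[OF assms] by linarith+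
qed

lemma Ppos: "0 \<le> x \<Longrightarrow> x < 1 \<Longrightarrow> 0 < (2::real)^k*(1+x)/(1-x)" by simp

lemma exp_le_pt: "0 \<le> x \<Longrightarrow> x < 1 \<Longrightarrow> b \<le> real k*L2lo + atlo x \<Longrightarrow> 2^k*(1+x)/(1-x) \<le> FB \<Longrightarrow> exp b \<le> FB"
  using lnP(1)[of x k] Ppos[of x k] by (smt (verit) exp_le_cancel_iff exp_ln)
lemma exp_ge_pt: "0 \<le> x \<Longrightarrow> x < 1 \<Longrightarrow> real k*L2hi + athi x \<le> a \<Longrightarrow> EA \<le> 2^k*(1+x)/(1-x) \<Longrightarrow> EA \<le> exp a"
  using lnP(2)[of x k] Ppos[of x k] by (smt (verit) exp_le_cancel_iff exp_ln)
lemma ln_ge_pt: "0 \<le> x \<Longrightarrow> x < 1 \<Longrightarrow> 2^k*(1+x)/(1-x) \<le> p \<Longrightarrow> LA \<le> real k*L2lo + atlo x \<Longrightarrow> LA \<le> ln p"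
  using lnP(1)[of x k] Ppos[of x k] by (smt (verit) ln_le_cancel_iff)
lemma ln_le_pt: "0 \<le> x \<Longrightarrow> x < 1 \<Longrightarrow> 0 < p \<Longrightarrow> p \<le> 2^k*(1+x)/(1-x) \<Longrightarrow> real k*L2hi + athi x \<le> U \<Longrightarrow> ln p \<le> U"
  using lnP(2)[of x k] Ppos[of x k] by (smt (verit) ln_le_cancel_iff)
lemma ln_le_inv_pt: "0 \<le> x \<Longrightarrow> x < 1 \<Longrightarrow> 0 < p \<Longrightarrow> 2^k*(1+x)/(1-x) \<le> 1/p \<Longrightarrow> - (real k*L2lo + atlo x) \<le> U \<Longrightarrow> ln p \<le> U"
  using ln_ge_pt[of x k "1/p" "real k*L2lo + atlo x"] by (simp add: ln_div)
lemma ln_ge_inv_pt: "0 \<le> x \<Longrightarrow> x < 1 \<Longrightarrow> 0 < p \<Longrightarrow> 1/p \<le> 2^k*(1+x)/(1-x) \<Longrightarrow> LNA \<le> - (real k*L2hi + athi x) \<Longrightarrow> LNA \<le> ln p"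
  using ln_le_pt[of x "1/p" k "real k*L2hi + athi x"] by (simp add: ln_div)

lemmas numdefs2 = atlo_def athi_def power_divide c0_def L2lo_def L2hi_def



lemma join: assumes "\<And>L. a \<le> L \<Longrightarrow> L \<le> b \<Longrightarrow> 0 \<le> hfun L" "\<And>L. b \<le> L \<Longrightarrow> L \<le> c \<Longrightarrow> 0 \<le> hfun L"
  "a \<le> L" "L \<le> c" shows "0 \<le> hfun L"
  using assms by (cases "L \<le> b") auto

lemma ivF2_0: assumes "(1/50::real) \<le> L" "L \<le> (7/250::real)" shows "0 \<le> hfun L"
  by (rule F2_master[of "(1/50::real)" L "(7/250::real)" "(66455/64617::real)" "(309/15625::real)" "(33095/32441::real)" "(-39120247/10000000::real)" "(142069/5000000::real)",
    OF _ _ _ _ exp_le_pt[where x="(919/65536::real)" and k=0] ln_ge_pt[where x="(81/8192::real)" and k=0]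
     exp_ge_pt[where x="(327/32768::real)" and k=0] ln_ge_inv_pt[where x="(7193/32768::real)" and k=5] ln_le_pt[where x="(931/65536::real)" and k=0]])
   (use assms in \<open>simp_all add: numdefs2\<close>)
lemma ivF2_1: assumes "(7/250::real) \<le> L" "L \<le> (19/500::real)" shows "0 \<le> hfun L"
  by (rule F2_master[of "(7/250::real)" L "(19/500::real)" "(66783/64289::real)" "(34487/1250000::real)" "(16613/16155::real)" "(-3575557/1000000::real)" "(387317/10000000::real)",
    OF _ _ _ _ exp_le_pt[where x="(1247/65536::real)" and k=0] ln_ge_pt[where x="(113/8192::real)" and k=0]
     exp_ge_pt[where x="(229/16384::real)" and k=0] ln_ge_inv_pt[where x="(3595/65536::real)" and k=5] ln_le_pt[where x="(1269/65536::real)" and k=0]])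
   (use assms in \<open>simp_all add: numdefs2\<close>)
lemma ivF2_2: assumes "(19/500::real) \<le> L" "L \<le> (51/1000::real)" shows "0 \<le> hfun L"
  by (rule F2_master[of "(19/500::real)" L "(51/1000::real)" "(8401/7983::real)" "(186331/5000000::real)" "(16695/16073::real)" "(-52323/16000::real)" "(261443/5000000::real)",
    OF _ _ _ _ exp_le_pt[where x="(209/8192::real)" and k=0] ln_ge_pt[where x="(1221/65536::real)" and k=0]
     exp_ge_pt[where x="(311/16384::real)" and k=0] ln_ge_inv_pt[where x="(15977/65536::real)" and k=4] ln_le_pt[where x="(1713/65536::real)" and k=0]])
   (use assms in \<open>simp_all add: numdefs2\<close>)
lemma ivF2_3: assumes "(51/1000::real) \<le> L" "L \<le> (33/500::real)" shows "0 \<le> hfun L"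
  by (rule F2_master[of "(51/1000::real)" L "(33/500::real)" "(67699/63373::real)" "(497233/10000000::real)" "(67205/63867::real)" "(-29759541/10000000::real)" "(85177/1250000::real)",
    OF _ _ _ _ exp_le_pt[where x="(2163/65536::real)" and k=0] ln_ge_pt[where x="(1629/65536::real)" and k=0]
     exp_ge_pt[where x="(1669/65536::real)" and k=0] ln_ge_inv_pt[where x="(6641/65536::real)" and k=4] ln_le_pt[where x="(279/8192::real)" and k=0]])
   (use assms in \<open>simp_all add: numdefs2\<close>)
lemma ivF2_4: assumes "(33/500::real) \<le> L" "L \<le> (21/250::real)" shows "0 \<le> hfun L"
  by (rule F2_master[of "(33/500::real)" L "(21/250::real)" "(1067/981::real)" "(12779/200000::real)" "(4231/3961::real)" "(-27181309/10000000::real)" "(874581/10000000::real)",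
    OF _ _ _ _ exp_le_pt[where x="(43/1024::real)" and k=0] ln_ge_pt[where x="(2093/65536::real)" and k=0]
     exp_ge_pt[where x="(135/4096::real)" and k=0] ln_ge_inv_pt[where x="(20245/65536::real)" and k=3] ln_le_pt[where x="(179/4096::real)" and k=0]])
   (use assms in \<open>simp_all add: numdefs2\<close>)
lemma ivF2_5: assumes "(21/250::real) \<le> L" "L \<le> (13/125::real)" shows "0 \<le> hfun L"
  by (rule F2_master[of "(21/250::real)" L "(13/125::real)" "(34471/31065::real)" "(161281/2000000::real)" "(68285/62787::real)" "(-12384797/5000000::real)" "(546197/5000000::real)",
    OF _ _ _ _ exp_le_pt[where x="(1703/32768::real)" and k=0] ln_ge_pt[where x="(2641/65536::real)" and k=0]
     exp_ge_pt[where x="(2749/65536::real)" and k=0] ln_ge_inv_pt[where x="(12857/65536::real)" and k=3] ln_le_pt[where x="(447/8192::real)" and k=0]])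
   (use assms in \<open>simp_all add: numdefs2\<close>)
lemma ivF2_6: assumes "(13/125::real) \<le> L" "L \<le> (1/8::real)" shows "0 \<le> hfun L"
  by (rule F2_master[of "(13/125::real)" L "(1/8::real)" "(17407/15361::real)" "(98927/1000000::real)" "(68939/62133::real)" "(-22633691/10000000::real)" "(165609/1250000::real)",
    OF _ _ _ _ exp_le_pt[where x="(1023/16384::real)" and k=0] ln_ge_pt[where x="(3239/65536::real)" and k=0]
     exp_ge_pt[where x="(3403/65536::real)" and k=0] ln_ge_inv_pt[where x="(3005/32768::real)" and k=3] ln_le_pt[where x="(4335/65536::real)" and k=0]])
   (use assms in \<open>simp_all add: numdefs2\<close>)
lemma ivF2_7: assumes "(1/8::real) \<le> L" "L \<le> (147/1000::real)" shows "0 \<le> hfun L"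
  by (rule F2_master[of "(1/8::real)" L "(147/1000::real)" "(35173/30363::real)" "(294453/2500000::real)" "(69625/61447::real)" "(-20794417/10000000::real)" "(1572753/10000000::real)",
    OF _ _ _ _ exp_le_pt[where x="(2405/32768::real)" and k=0] ln_ge_pt[where x="(3855/65536::real)" and k=0]
     exp_ge_pt[where x="(4089/65536::real)" and k=0] ln_ge_inv_pt[where x="(0::real)" and k=3] ln_le_pt[where x="(5143/65536::real)" and k=0]])
   (use assms in \<open>simp_all add: numdefs2\<close>)
lemma ivF2_8: assumes "(147/1000::real) \<le> L" "L \<le> (169/1000::real)" shows "0 \<le> hfun L"
  by (rule F2_master[of "(147/1000::real)" L "(169/1000::real)" "(35531/30005::real)" "(1371469/10000000::real)" "(70343/60729::real)" "(-19173541/10000000::real)" "(1824503/10000000::real)",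
    OF _ _ _ _ exp_le_pt[where x="(2763/32768::real)" and k=0] ln_ge_pt[where x="(4487/65536::real)" and k=0]
     exp_ge_pt[where x="(4807/65536::real)" and k=0] ln_ge_inv_pt[where x="(4251/16384::real)" and k=2] ln_le_pt[where x="(2981/32768::real)" and k=0]])
   (use assms in \<open>simp_all add: numdefs2\<close>)
lemma ivF2_9: assumes "(169/1000::real) \<le> L" "L \<le> (191/1000::real)" shows "0 \<le> hfun L"
  by (rule F2_master[of "(169/1000::real)" L "(191/1000::real)" "(71777/59295::real)" "(1561391/10000000::real)" "(71059/60013::real)" "(-4444701/2500000::real)" "(65007/312500::real)",
    OF _ _ _ _ exp_le_pt[where x="(6241/65536::real)" and k=0] ln_ge_pt[where x="(2553/32768::real)" and k=0]
     exp_ge_pt[where x="(5523/65536::real)" and k=0] ln_ge_inv_pt[where x="(6335/32768::real)" and k=2] ln_le_pt[where x="(849/8192::real)" and k=0]])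
   (use assms in \<open>simp_all add: numdefs2\<close>)
lemma ivF2_10: assumes "(191/1000::real) \<le> L" "L \<le> (213/1000::real)" shows "0 \<le> hfun L"
  by (rule F2_master[of "(191/1000::real)" L "(213/1000::real)" "(72491/58581::real)" "(349581/2000000::real)" "(35887/29649::real)" "(-3310973/2000000::real)" "(1169859/5000000::real)",
    OF _ _ _ _ exp_le_pt[where x="(6955/65536::real)" and k=0] ln_ge_pt[where x="(5713/65536::real)" and k=0]
     exp_ge_pt[where x="(3119/32768::real)" and k=0] ln_ge_inv_pt[where x="(137/1024::real)" and k=2] ln_le_pt[where x="(477/4096::real)" and k=0]])
   (use assms in \<open>simp_all add: numdefs2\<close>)
lemma ivF2_11: assumes "(213/1000::real) \<le> L" "L \<le> (47/200::real)" shows "0 \<le> hfun L"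
  by (rule F2_master[of "(213/1000::real)" L "(47/200::real)" "(73203/57869::real)" "(965359/5000000::real)" "(9061/7323::real)" "(-1933109/1250000::real)" "(2602791/10000000::real)",
    OF _ _ _ _ exp_le_pt[where x="(7667/65536::real)" and k=0] ln_ge_pt[where x="(6307/65536::real)" and k=0]
     exp_ge_pt[where x="(869/8192::real)" and k=0] ln_ge_inv_pt[where x="(2619/32768::real)" and k=2] ln_le_pt[where x="(8481/65536::real)" and k=0]])
   (use assms in \<open>simp_all add: numdefs2\<close>)
lemma ivF2_12: assumes "(47/200::real) \<le> L" "L \<le> (32/125::real)" shows "0 \<le> hfun L"
  by (rule F2_master[of "(47/200::real)" L "(32/125::real)" "(73881/57191::real)" "(2110459/10000000::real)" "(4575/3617::real)" "(-14481733/10000000::real)" "(142871/500000::real)",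
    OF _ _ _ _ exp_le_pt[where x="(8345/65536::real)" and k=0] ln_ge_pt[where x="(3445/32768::real)" and k=0]
     exp_ge_pt[where x="(479/4096::real)" and k=0] ln_ge_inv_pt[where x="(2027/65536::real)" and k=2] ln_le_pt[where x="(2325/16384::real)" and k=0]])
   (use assms in \<open>simp_all add: numdefs2\<close>)
lemma ivF2_13: assumes "(32/125::real) \<le> L" "L \<le> (277/1000::real)" shows "0 \<le> hfun L"
  by (rule F2_master[of "(32/125::real)" L "(277/1000::real)" "(74557/56515::real)" "(2279101/10000000::real)" "(36939/28597::real)" "(-13625837/10000000::real)" "(97339/312500::real)",
    OF _ _ _ _ exp_le_pt[where x="(9021/65536::real)" and k=0] ln_ge_pt[where x="(1859/16384::real)" and k=0]
     exp_ge_pt[where x="(4171/32768::real)" and k=0] ln_ge_inv_pt[where x="(661/2048::real)" and k=1] ln_le_pt[where x="(10125/65536::real)" and k=0]])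
   (use assms in \<open>simp_all add: numdefs2\<close>)
lemma ivF2_14: assumes "(277/1000::real) \<le> L" "L \<le> (297/1000::real)" shows "0 \<le> hfun L"
  by (rule F2_master[of "(277/1000::real)" L "(297/1000::real)" "(75199/55873::real)" "(305621/1250000::real)" "(37277/28259::real)" "(-6418703/5000000::real)" "(26273/78125::real)",
    OF _ _ _ _ exp_le_pt[where x="(9663/65536::real)" and k=0] ln_ge_pt[where x="(1993/16384::real)" and k=0]
     exp_ge_pt[where x="(4509/32768::real)" and k=0] ln_ge_inv_pt[where x="(18809/65536::real)" and k=1] ln_le_pt[where x="(10917/65536::real)" and k=0]])
   (use assms in \<open>simp_all add: numdefs2\<close>)
lemma ivF2_15: assumes "(297/1000::real) \<le> L" "L \<le> (79/250::real)" shows "0 \<le> hfun L"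
  by (rule F2_master[of "(297/1000::real)" L "(79/250::real)" "(75807/55265::real)" "(2600307/10000000::real)" "(18799/13969::real)" "(-6070221/5000000::real)" "(1800519/5000000::real)",
    OF _ _ _ _ exp_le_pt[where x="(10271/65536::real)" and k=0] ln_ge_pt[where x="(8473/65536::real)" and k=0]
     exp_ge_pt[where x="(2415/16384::real)" and k=0] ln_ge_inv_pt[where x="(16693/65536::real)" and k=1] ln_le_pt[where x="(5837/32768::real)" and k=0]])
   (use assms in \<open>simp_all add: numdefs2\<close>)
lemma ivF2_16: assumes "(79/250::real) \<le> L" "L \<le> (67/200::real)" shows "0 \<le> hfun L"
  by (rule F2_master[of "(79/250::real)" L "(67/200::real)" "(76413/54659::real)" "(2745697/10000000::real)" "(18951/13817::real)" "(-576011/500000::real)" "(3841413/10000000::real)",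
    OF _ _ _ _ exp_le_pt[where x="(10877/65536::real)" and k=0] ln_ge_pt[where x="(8941/65536::real)" and k=0]
     exp_ge_pt[where x="(2567/16384::real)" and k=0] ln_ge_inv_pt[where x="(7389/32768::real)" and k=1] ln_le_pt[where x="(12435/65536::real)" and k=0]])
   (use assms in \<open>simp_all add: numdefs2\<close>)
lemma ivF2_17: assumes "(67/200::real) \<le> L" "L \<le> (353/1000::real)" shows "0 \<le> hfun L"
  by (rule F2_master[of "(67/200::real)" L "(353/1000::real)" "(38493/27043::real)" "(1444597/5000000::real)" "(38205/27331::real)" "(-5468247/5000000::real)" "(4071121/10000000::real)",
    OF _ _ _ _ exp_le_pt[where x="(5725/32768::real)" and k=0] ln_ge_pt[where x="(4701/32768::real)" and k=0]
     exp_ge_pt[where x="(5437/32768::real)" and k=0] ln_ge_inv_pt[where x="(12951/65536::real)" and k=1] ln_le_pt[where x="(13159/65536::real)" and k=0]])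
   (use assms in \<open>simp_all add: numdefs2\<close>)
lemma ivF2_18: assumes "(353/1000::real) \<le> L" "L \<le> (37/100::real)" shows "0 \<le> hfun L"
  by (rule F2_master[of "(353/1000::real)" L "(37/100::real)" "(77525/53547::real)" "(755749/2500000::real)" "(76983/54089::real)" "(-81353/78125::real)" "(2145037/5000000::real)",
    OF _ _ _ _ exp_le_pt[where x="(11989/65536::real)" and k=0] ln_ge_pt[where x="(9831/65536::real)" and k=0]
     exp_ge_pt[where x="(11447/65536::real)" and k=0] ln_ge_inv_pt[where x="(11295/65536::real)" and k=1] ln_le_pt[where x="(6923/32768::real)" and k=0]])
   (use assms in \<open>simp_all add: numdefs2\<close>)
lemma ivF2_19: assumes "(37/100::real) \<le> L" "L \<le> (387/1000::real)" shows "0 \<le> hfun L"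
  by (rule F2_master[of "(37/100::real)" L "(387/1000::real)" "(78063/53009::real)" "(629599/2000000::real)" "(38761/26775::real)" "(-4971303/5000000::real)" "(902073/2000000::real)",
    OF _ _ _ _ exp_le_pt[where x="(12527/65536::real)" and k=0] ln_ge_pt[where x="(10231/65536::real)" and k=0]
     exp_ge_pt[where x="(5993/32768::real)" and k=0] ln_ge_inv_pt[where x="(9793/65536::real)" and k=1] ln_le_pt[where x="(7267/32768::real)" and k=0]])
   (use assms in \<open>simp_all add: numdefs2\<close>)
lemma ivF2_20: assumes "(387/1000::real) \<le> L" "L \<le> (403/1000::real)" shows "0 \<le> hfun L"
  by (rule F2_master[of "(387/1000::real)" L "(403/1000::real)" "(78567/52505::real)" "(1635679/5000000::real)" "(19515/13253::real)" "(-1898723/2000000::real)" "(2359579/5000000::real)",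
    OF _ _ _ _ exp_le_pt[where x="(13031/65536::real)" and k=0] ln_ge_pt[where x="(10625/65536::real)" and k=0]
     exp_ge_pt[where x="(3131/16384::real)" and k=0] ln_ge_inv_pt[where x="(4175/32768::real)" and k=1] ln_le_pt[where x="(15183/65536::real)" and k=0]])
   (use assms in \<open>simp_all add: numdefs2\<close>)
lemma ivF2_21: assumes "(403/1000::real) \<le> L" "L \<le> (209/500::real)" shows "0 \<le> hfun L"
  by (rule F2_master[of "(403/1000::real)" L "(209/500::real)" "(79039/52033::real)" "(3385861/10000000::real)" "(19641/13127::real)" "(-1136029/1250000::real)" "(491633/1000000::real)",
    OF _ _ _ _ exp_le_pt[where x="(13503/65536::real)" and k=0] ln_ge_pt[where x="(5495/32768::real)" and k=0]
     exp_ge_pt[where x="(3257/16384::real)" and k=0] ln_ge_inv_pt[where x="(55/512::real)" and k=1] ln_le_pt[where x="(15793/65536::real)" and k=0]])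
   (use assms in \<open>simp_all add: numdefs2\<close>)
lemma ivF2_22: assumes "(209/500::real) \<le> L" "L \<le> (433/1000::real)" shows "0 \<le> hfun L"
  by (rule F2_master[of "(209/500::real)" L "(433/1000::real)" "(19877/12891::real)" "(698481/2000000::real)" "(19759/13009::real)" "(-4361373/5000000::real)" "(2557221/5000000::real)",
    OF _ _ _ _ exp_le_pt[where x="(3493/16384::real)" and k=0] ln_ge_pt[where x="(11329/65536::real)" and k=0]
     exp_ge_pt[where x="(3375/16384::real)" and k=0] ln_ge_inv_pt[where x="(2927/32768::real)" and k=1] ln_le_pt[where x="(16403/65536::real)" and k=0]])
   (use assms in \<open>simp_all add: numdefs2\<close>)
lemma ivF2_23: assumes "(433/1000::real) \<le> L" "L \<le> (447/1000::real)" shows "0 \<le> hfun L"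
  by (rule F2_master[of "(433/1000::real)" L "(447/1000::real)" "(39973/25563::real)" "(359757/1000000::real)" "(79505/51567::real)" "(-8370413/10000000::real)" "(1060091/2000000::real)",
    OF _ _ _ _ exp_le_pt[where x="(7205/32768::real)" and k=0] ln_ge_pt[where x="(11663/65536::real)" and k=0]
     exp_ge_pt[where x="(13969/65536::real)" and k=0] ln_ge_inv_pt[where x="(4707/65536::real)" and k=1] ln_le_pt[where x="(16973/65536::real)" and k=0]])
   (use assms in \<open>simp_all add: numdefs2\<close>)
lemma ivF2_24: assumes "(447/1000::real) \<le> L" "L \<le> (461/1000::real)" shows "0 \<le> hfun L"
  by (rule F2_master[of "(447/1000::real)" L "(461/1000::real)" "(40191/25345::real)" "(3694723/10000000::real)" "(79943/51129::real)" "(-2013007/2500000::real)" "(685921/1250000::real)",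
    OF _ _ _ _ exp_le_pt[where x="(7423/32768::real)" and k=0] ln_ge_pt[where x="(11971/65536::real)" and k=0]
     exp_ge_pt[where x="(14407/65536::real)" and k=0] ln_ge_inv_pt[where x="(917/16384::real)" and k=1] ln_le_pt[where x="(17543/65536::real)" and k=0]])
   (use assms in \<open>simp_all add: numdefs2\<close>)
lemma ivF2_25: assumes "(461/1000::real) \<le> L" "L \<le> (237/500::real)" shows "0 \<le> hfun L"
  by (rule F2_master[of "(461/1000::real)" L "(237/500::real)" "(80785/50287::real)" "(37911/100000::real)" "(80379/50693::real)" "(-3871843/5000000::real)" "(5661677/10000000::real)",
    OF _ _ _ _ exp_le_pt[where x="(15249/65536::real)" and k=0] ln_ge_pt[where x="(3069/16384::real)" and k=0]
     exp_ge_pt[where x="(14843/65536::real)" and k=0] ln_ge_inv_pt[where x="(665/16384::real)" and k=1] ln_le_pt[where x="(2259/8192::real)" and k=0]])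
   (use assms in \<open>simp_all add: numdefs2\<close>)
lemma ivF2_26: assumes "(237/500::real) \<le> L" "L \<le> (487/1000::real)" shows "0 \<le> hfun L"
  by (rule F2_master[of "(237/500::real)" L "(487/1000::real)" "(81187/49885::real)" "(3879731/10000000::real)" "(40391/25145::real)" "(-7465657/10000000::real)" "(1459207/2500000::real)",
    OF _ _ _ _ exp_le_pt[where x="(15651/65536::real)" and k=0] ln_ge_pt[where x="(3139/16384::real)" and k=0]
     exp_ge_pt[where x="(7623/32768::real)" and k=0] ln_ge_inv_pt[where x="(875/32768::real)" and k=1] ln_le_pt[where x="(18601/65536::real)" and k=0]])
   (use assms in \<open>simp_all add: numdefs2\<close>)
lemma ivF2_27: assumes "(487/1000::real) \<le> L" "L \<le> (499/1000::real)" shows "0 \<le> hfun L"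
  by (rule F2_master[of "(487/1000::real)" L "(499/1000::real)" "(40779/24757::real)" "(99189/250000::real)" "(2537/1559::real)" "(-179879/250000::real)" "(5999179/10000000::real)",
    OF _ _ _ _ exp_le_pt[where x="(8011/32768::real)" and k=0] ln_ge_pt[where x="(12833/65536::real)" and k=0]
     exp_ge_pt[where x="(489/2048::real)" and k=0] ln_ge_inv_pt[where x="(27/2048::real)" and k=1] ln_le_pt[where x="(19089/65536::real)" and k=0]])
   (use assms in \<open>simp_all add: numdefs2\<close>)
lemma ivF2_28: assumes "(499/1000::real) \<le> L" "L \<le> (511/1000::real)" shows "0 \<le> hfun L"
  by (rule F2_master[of "(499/1000::real)" L "(511/1000::real)" "(81927/49145::real)" "(505989/1250000::real)" "(81555/49517::real)" "(-3475807/5000000::real)" "(3080983/5000000::real)",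
    OF _ _ _ _ exp_le_pt[where x="(16391/65536::real)" and k=0] ln_ge_pt[where x="(6543/32768::real)" and k=0]
     exp_ge_pt[where x="(16019/65536::real)" and k=0] ln_ge_inv_pt[where x="(33/32768::real)" and k=1] ln_le_pt[where x="(2447/8192::real)" and k=0]])
   (use assms in \<open>simp_all add: numdefs2\<close>)
lemma ivF2_29: assumes "(511/1000::real) \<le> L" "L \<le> (261/500::real)" shows "0 \<le> hfun L"
  by (rule F2_master[of "(511/1000::real)" L "(261/500::real)" "(10283/6101::real)" "(4127437/10000000::real)" "(20481/12287::real)" "(-671413/1000000::real)" "(3155873/5000000::real)",
    OF _ _ _ _ exp_le_pt[where x="(2091/8192::real)" and k=0] ln_ge_pt[where x="(1667/8192::real)" and k=0]
     exp_ge_pt[where x="(4097/16384::real)" and k=0] ln_ge_inv_pt[where x="(10605/32768::real)" and k=0] ln_le_pt[where x="(10011/32768::real)" and k=0]])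
   (use assms in \<open>simp_all add: numdefs2\<close>)
lemma ivF2_30: assumes "(261/500::real) \<le> L" "L \<le> (533/1000::real)" shows "0 \<le> hfun L"
  by (rule F2_master[of "(261/500::real)" L "(533/1000::real)" "(82601/48471::real)" "(4200077/10000000::real)" "(82261/48811::real)" "(-3250563/5000000::real)" "(3231107/5000000::real)",
    OF _ _ _ _ exp_le_pt[where x="(17065/65536::real)" and k=0] ln_ge_pt[where x="(3391/16384::real)" and k=0]
     exp_ge_pt[where x="(16725/65536::real)" and k=0] ln_ge_inv_pt[where x="(20583/65536::real)" and k=0] ln_le_pt[where x="(5117/16384::real)" and k=0]])
   (use assms in \<open>simp_all add: numdefs2\<close>)
lemma ivF2_31: assumes "(533/1000::real) \<le> L" "L \<le> (68/125::real)" shows "0 \<le> hfun L"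
  by (rule F2_master[of "(533/1000::real)" L "(68/125::real)" "(10367/6017::real)" "(1068047/2500000::real)" "(41299/24237::real)" "(-3146283/5000000::real)" "(6613053/10000000::real)",
    OF _ _ _ _ exp_le_pt[where x="(2175/8192::real)" and k=0] ln_ge_pt[where x="(6895/32768::real)" and k=0]
     exp_ge_pt[where x="(8531/32768::real)" and k=0] ln_ge_inv_pt[where x="(19965/65536::real)" and k=0] ln_le_pt[where x="(20913/65536::real)" and k=0]])
   (use assms in \<open>simp_all add: numdefs2\<close>)
lemma ivF2_32: assumes "(68/125::real) \<le> L" "L \<le> (277/500::real)" shows "0 \<le> hfun L"
  by (rule F2_master[of "(68/125::real)" L "(277/500::real)" "(10405/5979::real)" "(542931/1250000::real)" "(82933/48139::real)" "(-6088331/10000000::real)" "(10801/16000::real)",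
    OF _ _ _ _ exp_le_pt[where x="(2213/8192::real)" and k=0] ln_ge_pt[where x="(14013/65536::real)" and k=0]
     exp_ge_pt[where x="(17397/65536::real)" and k=0] ln_ge_inv_pt[where x="(4839/16384::real)" and k=0] ln_le_pt[where x="(21317/65536::real)" and k=0]])
   (use assms in \<open>simp_all add: numdefs2\<close>)
lemma ivF2_33: assumes "(277/500::real) \<le> L" "L \<le> (141/250::real)" shows "0 \<le> hfun L"
  by (rule F2_master[of "(277/500::real)" L "(141/250::real)" "(10443/5941::real)" "(1102023/2500000::real)" "(83237/47835::real)" "(-2952967/5000000::real)" "(6888473/10000000::real)",
    OF _ _ _ _ exp_le_pt[where x="(2251/8192::real)" and k=0] ln_ge_pt[where x="(14215/65536::real)" and k=0]
     exp_ge_pt[where x="(17701/65536::real)" and k=0] ln_ge_inv_pt[where x="(18809/65536::real)" and k=0] ln_le_pt[where x="(2715/8192::real)" and k=0]])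
   (use assms in \<open>simp_all add: numdefs2\<close>)
lemma ivF2_34: assumes "(141/250::real) \<le> L" "L \<le> (287/500::real)" shows "0 \<le> hfun L"
  by (rule F2_master[of "(141/250::real)" L "(287/500::real)" "(41923/23613::real)" "(894437/2000000::real)" "(83541/47531::real)" "(-2863567/5000000::real)" "(54896/78125::real)",
    OF _ _ _ _ exp_le_pt[where x="(9155/32768::real)" and k=0] ln_ge_pt[where x="(14415/65536::real)" and k=0]
     exp_ge_pt[where x="(18005/65536::real)" and k=0] ln_ge_inv_pt[where x="(9135/32768::real)" and k=0] ln_le_pt[where x="(39/8192::real)" and k=1]])
   (use assms in \<open>simp_all add: numdefs2\<close>)
lemma ivF2_35: assumes "(287/500::real) \<le> L" "L \<le> (583/1000::real)" shows "0 \<le> hfun L"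
  by (rule F2_master[of "(287/500::real)" L "(583/1000::real)" "(42059/23477::real)" "(283503/625000::real)" "(83843/47229::real)" "(-2775763/5000000::real)" "(7151513/10000000::real)",
    OF _ _ _ _ exp_le_pt[where x="(9291/32768::real)" and k=0] ln_ge_pt[where x="(7307/32768::real)" and k=0]
     exp_ge_pt[where x="(18307/65536::real)" and k=0] ln_ge_inv_pt[where x="(8869/32768::real)" and k=0] ln_le_pt[where x="(721/65536::real)" and k=1]])
   (use assms in \<open>simp_all add: numdefs2\<close>)
lemma ivF2_36: assumes "(583/1000::real) \<le> L" "L \<le> (74/125::real)" shows "0 \<le> hfun L"
  by (rule F2_master[of "(583/1000::real)" L "(74/125::real)" "(84389/46683::real)" "(4592927/10000000::real)" "(84115/46957::real)" "(-1348941/2500000::real)" "(1455271/2000000::real)",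
    OF _ _ _ _ exp_le_pt[where x="(18853/65536::real)" and k=0] ln_ge_pt[where x="(14791/65536::real)" and k=0]
     exp_ge_pt[where x="(18579/65536::real)" and k=0] ln_ge_inv_pt[where x="(1079/4096::real)" and k=0] ln_le_pt[where x="(565/32768::real)" and k=1]])
   (use assms in \<open>simp_all add: numdefs2\<close>)
lemma ivF2_37: assumes "(74/125::real) \<le> L" "L \<le> (3/5::real)" shows "0 \<le> hfun L"
  by (rule F2_master[of "(74/125::real)" L "(3/5::real)" "(84629/46443::real)" "(4649879/10000000::real)" "(42193/23343::real)" "(-5242599/10000000::real)" "(7387789/10000000::real)",
    OF _ _ _ _ exp_le_pt[where x="(19093/65536::real)" and k=0] ln_ge_pt[where x="(1871/8192::real)" and k=0]
     exp_ge_pt[where x="(9425/32768::real)" and k=0] ln_ge_inv_pt[where x="(4199/16384::real)" and k=0] ln_le_pt[where x="(1495/65536::real)" and k=1]])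
   (use assms in \<open>simp_all add: numdefs2\<close>)
lemma ivF1_0: assumes "(3/5::real) \<le> L" "L \<le> (123/200::real)" shows "0 \<le> hfun L"
  by (rule F1_master[of "(3/5::real)" L "(123/200::real)" "(42539/22997::real)" "(4699813/10000000::real)" "(-4861287/10000000::real)" "(42313/23223::real)" "(406003/625000::real)",
    OF _ _ _ exp_le_pt[where x="(9771/32768::real)" and k=0] ln_ge_pt[where x="(15123/65536::real)" and k=0] ln_le_inv_pt[where x="(15623/65536::real)" and k=0]
     exp_ge_pt[where x="(9545/32768::real)" and k=0] _ ln_le_pt[where x="(2571/8192::real)" and k=0]])
   (use assms in \<open>simp_all add: numdefs2\<close>)
lemma ivF1_1: assumes "(123/200::real) \<le> L" "L \<le> (63/100::real)" shows "0 \<le> hfun L"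
  by (rule F1_master[of "(123/200::real)" L "(63/100::real)" "(85525/45547::real)" "(479307/1000000::real)" "(-4620267/10000000::real)" "(85075/45997::real)" "(315419/500000::real)",
    OF _ _ _ exp_le_pt[where x="(19989/65536::real)" and k=0] ln_ge_pt[where x="(3853/16384::real)" and k=0] ln_le_inv_pt[where x="(3719/16384::real)" and k=0]
     exp_ge_pt[where x="(19539/65536::real)" and k=0] _ ln_le_pt[where x="(5003/16384::real)" and k=0]])
   (use assms in \<open>simp_all add: numdefs2\<close>)
lemma ivF1_2: assumes "(63/100::real) \<le> L" "L \<le> (129/200::real)" shows "0 \<le> hfun L"
  by (rule F1_master[of "(63/100::real)" L "(129/200::real)" "(85969/45103::real)" "(4885561/10000000::real)" "(-54813/125000::real)" "(42761/22775::real)" "(6127137/10000000::real)",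
    OF _ _ _ exp_le_pt[where x="(20433/65536::real)" and k=0] ln_ge_pt[where x="(7849/32768::real)" and k=0] ln_le_inv_pt[where x="(14143/65536::real)" and k=0]
     exp_ge_pt[where x="(9993/32768::real)" and k=0] _ ln_le_pt[where x="(1217/4096::real)" and k=0]])
   (use assms in \<open>simp_all add: numdefs2\<close>)
lemma ivF1_3: assumes "(129/200::real) \<le> L" "L \<le> (661/1000::real)" shows "0 \<le> hfun L"
  by (rule F1_master[of "(129/200::real)" L "(661/1000::real)" "(43221/22315::real)" "(1244321/2500000::real)" "(-827971/2000000::real)" "(42983/22553::real)" "(238101/400000::real)",
    OF _ _ _ exp_le_pt[where x="(10453/32768::real)" and k=0] ln_ge_pt[where x="(15981/65536::real)" and k=0] ln_le_inv_pt[where x="(13375/65536::real)" and k=0]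
     exp_ge_pt[where x="(10215/32768::real)" and k=0] _ ln_le_pt[where x="(18949/65536::real)" and k=0]])
   (use assms in \<open>simp_all add: numdefs2\<close>)
lemma ivF1_4: assumes "(661/1000::real) \<le> L" "L \<le> (677/1000::real)" shows "0 \<le> hfun L"
  by (rule F1_master[of "(661/1000::real)" L "(677/1000::real)" "(86911/44161::real)" "(5074091/10000000::real)" "(-975161/2500000::real)" "(86439/44633::real)" "(5772827/10000000::real)",
    OF _ _ _ exp_le_pt[where x="(21375/65536::real)" and k=0] ln_ge_pt[where x="(16279/65536::real)" and k=0] ln_le_inv_pt[where x="(6311/32768::real)" and k=0]
     exp_ge_pt[where x="(20903/65536::real)" and k=0] _ ln_le_pt[where x="(2301/8192::real)" and k=0]])
   (use assms in \<open>simp_all add: numdefs2\<close>)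
lemma ivF1_5: assumes "(677/1000::real) \<le> L" "L \<le> (693/1000::real)" shows "0 \<le> hfun L"
  by (rule F1_master[of "(677/1000::real)" L "(693/1000::real)" "(87379/43693::real)" "(5169827/10000000::real)" "(-916737/2500000::real)" "(21727/11041::real)" "(1119993/2000000::real)",
    OF _ _ _ exp_le_pt[where x="(21843/65536::real)" and k=0] ln_ge_pt[where x="(16573/65536::real)" and k=0] ln_le_inv_pt[where x="(11883/65536::real)" and k=0]
     exp_ge_pt[where x="(5343/16384::real)" and k=0] _ ln_le_pt[where x="(17885/65536::real)" and k=0]])
   (use assms in \<open>simp_all add: numdefs2\<close>)
lemma ivF1_6: assumes "(693/1000::real) \<le> L" "L \<le> (709/1000::real)" shows "0 \<le> hfun L"
  by (rule F1_master[of "(693/1000::real)" L "(709/1000::real)" "(132114/65015::real)" "(1052963/2000000::real)" "(-429869/1250000::real)" "(5461/2731::real)" "(5432839/10000000::real)",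
    OF _ _ _ exp_le_pt[where x="(521/65536::real)" and k=1] ln_ge_pt[where x="(527/2048::real)" and k=0] ln_le_inv_pt[where x="(11159/65536::real)" and k=0]
     exp_ge_pt[where x="(1365/4096::real)" and k=0] _ ln_le_pt[where x="(17377/65536::real)" and k=0]])
   (use assms in \<open>simp_all add: numdefs2\<close>)
lemma ivF1_7: assumes "(709/1000::real) \<le> L" "L \<le> (29/40::real)" shows "0 \<le> hfun L"
  by (rule F1_master[of "(709/1000::real)" L "(29/40::real)" "(133162/64491::real)" "(5359053/10000000::real)" "(-643119/2000000::real)" "(66054/32509::real)" "(2636003/5000000::real)",
    OF _ _ _ exp_le_pt[where x="(1045/65536::real)" and k=1] ln_ge_pt[where x="(67/256::real)" and k=0] ln_le_inv_pt[where x="(10447/65536::real)" and k=0]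
     exp_ge_pt[where x="(259/32768::real)" and k=1] _ ln_le_pt[where x="(8443/32768::real)" and k=0]])
   (use assms in \<open>simp_all add: numdefs2\<close>)
lemma ivF1_8: assumes "(29/40::real) \<le> L" "L \<le> (741/1000::real)" shows "0 \<le> hfun L"
  by (rule F1_master[of "(29/40::real)" L "(741/1000::real)" "(134210/63967::real)" "(545221/1000000::real)" "(-14987/50000::real)" "(66578/32247::real)" "(5116721/10000000::real)",
    OF _ _ _ exp_le_pt[where x="(1569/65536::real)" and k=1] ln_ge_pt[where x="(4359/16384::real)" and k=0] ln_le_inv_pt[where x="(9749/65536::real)" and k=0]
     exp_ge_pt[where x="(521/32768::real)" and k=1] _ ln_le_pt[where x="(8205/32768::real)" and k=0]])
   (use assms in \<open>simp_all add: numdefs2\<close>)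
lemma ivF1_9: assumes "(741/1000::real) \<le> L" "L \<le> (379/500::real)" shows "0 \<le> hfun L"
  by (rule F1_master[of "(741/1000::real)" L "(379/500::real)" "(67662/31705::real)" "(5544281/10000000::real)" "(-1385289/5000000::real)" "(67102/31985::real)" "(4966903/10000000::real)",
    OF _ _ _ exp_le_pt[where x="(1063/32768::real)" and k=1] ln_ge_pt[where x="(4429/16384::real)" and k=0] ln_le_inv_pt[where x="(9021/65536::real)" and k=0]
     exp_ge_pt[where x="(783/32768::real)" and k=1] _ ln_le_pt[where x="(15949/65536::real)" and k=0]])
   (use assms in \<open>simp_all add: numdefs2\<close>)
lemma ivF1_10: assumes "(379/500::real) \<le> L" "L \<le> (31/40::real)" shows "0 \<le> hfun L"
  by (rule F1_master[of "(379/500::real)" L "(31/40::real)" "(68218/31427::real)" "(2820767/5000000::real)" "(-637201/2500000::real)" "(135318/63413::real)" "(4813427/10000000::real)",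
    OF _ _ _ exp_le_pt[where x="(1341/32768::real)" and k=1] ln_ge_pt[where x="(18011/65536::real)" and k=0] ln_le_inv_pt[where x="(8307/65536::real)" and k=0]
     exp_ge_pt[where x="(2123/65536::real)" and k=1] _ ln_le_pt[where x="(15475/65536::real)" and k=0]])
   (use assms in \<open>simp_all add: numdefs2\<close>)
lemma ivF1_11: assumes "(31/40::real) \<le> L" "L \<le> (99/125::real)" shows "0 \<le> hfun L"
  by (rule F1_master[of "(31/40::real)" L "(99/125::real)" "(68774/31149::real)" "(5737723/10000000::real)" "(-2331673/10000000::real)" "(136430/62857::real)" "(4665659/10000000::real)",
    OF _ _ _ exp_le_pt[where x="(1619/32768::real)" and k=1] ln_ge_pt[where x="(9151/32768::real)" and k=0] ln_le_inv_pt[where x="(3803/32768::real)" and k=0]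
     exp_ge_pt[where x="(2679/65536::real)" and k=1] _ ln_le_pt[where x="(15017/65536::real)" and k=0]])
   (use assms in \<open>simp_all add: numdefs2\<close>)
lemma ivF1_12: assumes "(99/125::real) \<le> L" "L \<le> (809/1000::real)" shows "0 \<le> hfun L"
  by (rule F1_master[of "(99/125::real)" L "(809/1000::real)" "(69330/30871::real)" "(729147/1250000::real)" "(-2119409/10000000::real)" "(137542/62301::real)" "(904641/2000000::real)",
    OF _ _ _ exp_le_pt[where x="(1897/32768::real)" and k=1] ln_ge_pt[where x="(9295/32768::real)" and k=0] ln_le_inv_pt[where x="(6919/65536::real)" and k=0]
     exp_ge_pt[where x="(3235/65536::real)" and k=1] _ ln_le_pt[where x="(7287/32768::real)" and k=0]])
   (use assms in \<open>simp_all add: numdefs2\<close>)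
lemma ivF1_13: assumes "(809/1000::real) \<le> L" "L \<le> (413/500::real)" shows "0 \<le> hfun L"
  by (rule F1_master[of "(809/1000::real)" L "(413/500::real)" "(34942/15297::real)" "(5927557/10000000::real)" "(-955657/5000000::real)" "(138654/61745::real)" "(2192841/5000000::real)",
    OF _ _ _ exp_le_pt[where x="(1087/16384::real)" and k=1] ln_ge_pt[where x="(9437/32768::real)" and k=0] ln_le_inv_pt[where x="(1561/16384::real)" and k=0]
     exp_ge_pt[where x="(3791/65536::real)" and k=1] _ ln_le_pt[where x="(14145/65536::real)" and k=0]])
   (use assms in \<open>simp_all add: numdefs2\<close>)
lemma ivF1_14: assumes "(413/500::real) \<le> L" "L \<le> (843/1000::real)" shows "0 \<le> hfun L"
  by (rule F1_master[of "(413/500::real)" L "(843/1000::real)" "(140878/60633::real)" "(3010597/5000000::real)" "(-426907/2500000::real)" "(139762/61191::real)" "(2126517/5000000::real)",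
    OF _ _ _ exp_le_pt[where x="(4903/65536::real)" and k=1] ln_ge_pt[where x="(19155/65536::real)" and k=0] ln_le_inv_pt[where x="(2791/32768::real)" and k=0]
     exp_ge_pt[where x="(4345/65536::real)" and k=1] _ ln_le_pt[where x="(6865/32768::real)" and k=0]])
   (use assms in \<open>simp_all add: numdefs2\<close>)
lemma ivF1_15: assumes "(843/1000::real) \<le> L" "L \<le> (43/50::real)" shows "0 \<le> hfun L"
  by (rule F1_master[of "(843/1000::real)" L "(43/50::real)" "(8874/3755::real)" "(6113749/10000000::real)" "(-753989/5000000::real)" "(35218/15159::real)" "(412521/1000000::real)",
    OF _ _ _ exp_le_pt[where x="(341/4096::real)" and k=1] ln_ge_pt[where x="(2429/8192::real)" and k=0] ln_le_inv_pt[where x="(1233/16384::real)" and k=0]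
     exp_ge_pt[where x="(1225/16384::real)" and k=1] _ ln_le_pt[where x="(13329/65536::real)" and k=0]])
   (use assms in \<open>simp_all add: numdefs2\<close>)
lemma ivF1_16: assumes "(43/50::real) \<le> L" "L \<le> (877/1000::real)" shows "0 \<le> hfun L"
  by (rule F1_master[of "(43/50::real)" L "(877/1000::real)" "(143090/59527::real)" "(6205553/10000000::real)" "(-82019/625000::real)" "(141978/60083::real)" "(2000923/5000000::real)",
    OF _ _ _ exp_le_pt[where x="(6009/65536::real)" and k=1] ln_ge_pt[where x="(9853/32768::real)" and k=0] ln_le_inv_pt[where x="(2147/32768::real)" and k=0]
     exp_ge_pt[where x="(5453/65536::real)" and k=1] _ ln_le_pt[where x="(12941/65536::real)" and k=0]])
   (use assms in \<open>simp_all add: numdefs2\<close>)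
lemma ivF1_17: assumes "(877/1000::real) \<le> L" "L \<le> (447/500::real)" shows "0 \<le> hfun L"
  by (rule F1_master[of "(877/1000::real)" L "(447/500::real)" "(144194/58975::real)" "(6296601/10000000::real)" "(-1120249/10000000::real)" "(71542/29765::real)" "(3882583/10000000::real)",
    OF _ _ _ exp_le_pt[where x="(6561/65536::real)" and k=1] ln_ge_pt[where x="(19977/65536::real)" and k=0] ln_le_inv_pt[where x="(3667/65536::real)" and k=0]
     exp_ge_pt[where x="(3003/32768::real)" and k=1] _ ln_le_pt[where x="(12565/65536::real)" and k=0]])
   (use assms in \<open>simp_all add: numdefs2\<close>)
lemma ivF1_18: assumes "(447/500::real) \<le> L" "L \<le> (911/1000::real)" shows "0 \<le> hfun L"
  by (rule F1_master[of "(447/500::real)" L "(911/1000::real)" "(18162/7303::real)" "(6386891/10000000::real)" "(-93207/1000000::real)" "(72094/29489::real)" "(1883851/5000000::real)",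
    OF _ _ _ exp_le_pt[where x="(889/8192::real)" and k=1] ln_ge_pt[where x="(20245/65536::real)" and k=0] ln_le_inv_pt[where x="(763/16384::real)" and k=0]
     exp_ge_pt[where x="(3279/32768::real)" and k=1] _ ln_le_pt[where x="(6101/32768::real)" and k=0]])
   (use assms in \<open>simp_all add: numdefs2\<close>)
lemma ivF1_19: assumes "(911/1000::real) \<le> L" "L \<le> (116/125::real)" shows "0 \<le> hfun L"
  by (rule F1_master[of "(911/1000::real)" L "(116/125::real)" "(73198/28937::real)" "(80951/125000::real)" "(-93389/1250000::real)" "(145290/58427::real)" "(3656537/10000000::real)",
    OF _ _ _ exp_le_pt[where x="(3831/32768::real)" and k=1] ln_ge_pt[where x="(20509/65536::real)" and k=0] ln_le_inv_pt[where x="(2447/65536::real)" and k=0]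
     exp_ge_pt[where x="(7109/65536::real)" and k=1] _ ln_le_pt[where x="(5925/32768::real)" and k=0]])
   (use assms in \<open>simp_all add: numdefs2\<close>)
lemma ivF1_20: assumes "(116/125::real) \<le> L" "L \<le> (189/200::real)" shows "0 \<le> hfun L"
  by (rule F1_master[of "(116/125::real)" L "(189/200::real)" "(147494/57325::real)" "(6564501/10000000::real)" "(-565641/10000000::real)" "(146390/57877::real)" "(1774529/5000000::real)",
    OF _ _ _ exp_le_pt[where x="(8211/65536::real)" and k=1] ln_ge_pt[where x="(10385/32768::real)" and k=0] ln_le_inv_pt[where x="(1853/65536::real)" and k=0]
     exp_ge_pt[where x="(7659/65536::real)" and k=1] _ ln_le_pt[where x="(11509/65536::real)" and k=0]])
   (use assms in \<open>simp_all add: numdefs2\<close>)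
lemma ivF1_21: assumes "(189/200::real) \<le> L" "L \<le> (481/500::real)" shows "0 \<le> hfun L"
  by (rule F1_master[of "(189/200::real)" L "(481/500::real)" "(148590/56777::real)" "(665249/1000000::real)" "(-96829/2500000::real)" "(9218/3583::real)" "(3445553/10000000::real)",
    OF _ _ _ exp_le_pt[where x="(8759/65536::real)" and k=1] ln_ge_pt[where x="(21029/65536::real)" and k=0] ln_le_inv_pt[where x="(1269/65536::real)" and k=0]
     exp_ge_pt[where x="(513/4096::real)" and k=1] _ ln_le_pt[where x="(2795/16384::real)" and k=0]])
   (use assms in \<open>simp_all add: numdefs2\<close>)
lemma ivF1_22: assumes "(481/500::real) \<le> L" "L \<le> (979/1000::real)" shows "0 \<le> hfun L"
  by (rule F1_master[of "(481/500::real)" L "(979/1000::real)" "(149682/56231::real)" "(6739363/10000000::real)" "(-42421/2000000::real)" "(37146/14195::real)" "(669011/2000000::real)",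
    OF _ _ _ exp_le_pt[where x="(9305/65536::real)" and k=1] ln_ge_pt[where x="(5321/16384::real)" and k=0] ln_le_inv_pt[where x="(695/65536::real)" and k=0]
     exp_ge_pt[where x="(2189/16384::real)" and k=1] _ ln_le_pt[where x="(2715/16384::real)" and k=0]])
   (use assms in \<open>simp_all add: numdefs2\<close>)
lemma ivF1_23: assumes "(979/1000::real) \<le> L" "L \<le> (249/250::real)" shows "0 \<le> hfun L"
  by (rule F1_master[of "(979/1000::real)" L "(249/250::real)" "(75386/27843::real)" "(3412899/5000000::real)" "(-19989/5000000::real)" "(74838/28117::real)" "(3248171/10000000::real)",
    OF _ _ _ exp_le_pt[where x="(4925/32768::real)" and k=1] ln_ge_pt[where x="(21537/65536::real)" and k=0] ln_le_inv_pt[where x="(131/65536::real)" and k=0]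
     exp_ge_pt[where x="(4651/32768::real)" and k=1] _ ln_le_pt[where x="(10551/65536::real)" and k=0]])
   (use assms in \<open>simp_all add: numdefs2\<close>)
lemma ivF1_24: assumes "(249/250::real) \<le> L" "L \<le> (1013/1000::real)" shows "0 \<le> hfun L"
  by (rule F1_master[of "(249/250::real)" L "(1013/1000::real)" "(75930/27571::real)" "(138229/200000::real)" "(129397/10000000::real)" "(150766/55689::real)" "(630913/2000000::real)",
    OF _ _ _ exp_le_pt[where x="(5197/32768::real)" and k=1] ln_ge_pt[where x="(21787/65536::real)" and k=0] ln_le_pt[where x="(53/8192::real)" and k=0]
     exp_ge_pt[where x="(9847/65536::real)" and k=1] _ ln_le_pt[where x="(2563/16384::real)" and k=0]])
   (use assms in \<open>simp_all add: numdefs2\<close>)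
lemma ivF1_25: assumes "(1013/1000::real) \<le> L" "L \<le> (103/100::real)" shows "0 \<le> hfun L"
  by (rule F1_master[of "(1013/1000::real)" L "(103/100::real)" "(19118/6825::real)" "(874521/1250000::real)" "(295737/10000000::real)" "(151854/55145::real)" "(3063907/10000000::real)",
    OF _ _ _ exp_le_pt[where x="(1367/8192::real)" and k=1] ln_ge_pt[where x="(53/16384::real)" and k=1] ln_le_pt[where x="(969/65536::real)" and k=0]
     exp_ge_pt[where x="(10391/65536::real)" and k=1] _ ln_le_pt[where x="(4981/32768::real)" and k=0]])
   (use assms in \<open>simp_all add: numdefs2\<close>)
lemma ivF1_26: assumes "(103/100::real) \<le> L" "L \<le> (1047/1000::real)" shows "0 \<le> hfun L"
  by (rule F1_master[of "(103/100::real)" L "(1047/1000::real)" "(154026/54059::real)" "(3540047/5000000::real)" "(459371/10000000::real)" "(152938/54603::real)" "(2976183/10000000::real)",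
    OF _ _ _ exp_le_pt[where x="(11477/65536::real)" and k=1] ln_ge_pt[where x="(487/65536::real)" and k=1] ln_le_pt[where x="(1505/65536::real)" and k=0]
     exp_ge_pt[where x="(10933/65536::real)" and k=1] _ ln_le_pt[where x="(9681/65536::real)" and k=0]])
   (use assms in \<open>simp_all add: numdefs2\<close>)
lemma ivF1_27: assumes "(1047/1000::real) \<le> L" "L \<le> (133/125::real)" shows "0 \<le> hfun L"
  by (rule F1_master[of "(1047/1000::real)" L "(133/125::real)" "(9694/3345::real)" "(7163719/10000000::real)" "(310311/5000000::real)" "(77010/27031::real)" "(180711/625000::real)",
    OF _ _ _ exp_le_pt[where x="(751/4096::real)" and k=1] ln_ge_pt[where x="(761/65536::real)" and k=1] ln_le_pt[where x="(2033/65536::real)" and k=0]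
     exp_ge_pt[where x="(5737/32768::real)" and k=1] _ ln_le_pt[where x="(9409/65536::real)" and k=0]])
   (use assms in \<open>simp_all add: numdefs2\<close>)
lemma ivF1_28: assumes "(133/125::real) \<le> L" "L \<le> (1081/1000::real)" shows "0 \<le> hfun L"
  by (rule F1_master[of "(133/125::real)" L "(1081/1000::real)" "(78090/26491::real)" "(3623219/5000000::real)" "(778897/10000000::real)" "(155098/53523::real)" "(1404581/5000000::real)",
    OF _ _ _ exp_le_pt[where x="(6277/32768::real)" and k=1] ln_ge_pt[where x="(129/8192::real)" and k=1] ln_le_pt[where x="(2551/65536::real)" and k=0]
     exp_ge_pt[where x="(12013/65536::real)" and k=1] _ ln_le_pt[where x="(9145/65536::real)" and k=0]])
   (use assms in \<open>simp_all add: numdefs2\<close>)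
lemma ivF1_29: assumes "(1081/1000::real) \<le> L" "L \<le> (549/500::real)" shows "0 \<le> hfun L"
  by (rule F1_master[of "(1081/1000::real)" L "(549/500::real)" "(157250/52447::real)" "(7328251/10000000::real)" "(93513/1000000::real)" "(156174/52985::real)" "(34123/125000::real)",
    OF _ _ _ exp_le_pt[where x="(13089/65536::real)" and k=1] ln_ge_pt[where x="(325/16384::real)" and k=1] ln_le_pt[where x="(1531/32768::real)" and k=0]
     exp_ge_pt[where x="(12551/65536::real)" and k=1] _ ln_le_pt[where x="(4445/32768::real)" and k=0]])
   (use assms in \<open>simp_all add: numdefs2\<close>)
lemma ivF1_30: assumes "(549/500::real) \<le> L" "L \<le> (223/200::real)" shows "0 \<le> hfun L"
  by (rule F1_master[of "(549/500::real)" L "(223/200::real)" "(158318/51913::real)" "(1852443/2500000::real)" "(1088721/10000000::real)" "(78622/26225::real)" "(1326389/5000000::real)",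
    OF _ _ _ exp_le_pt[where x="(13623/65536::real)" and k=1] ln_ge_pt[where x="(1567/65536::real)" and k=1] ln_le_pt[where x="(891/16384::real)" and k=0]
     exp_ge_pt[where x="(6543/32768::real)" and k=1] _ ln_le_pt[where x="(4321/32768::real)" and k=0]])
   (use assms in \<open>simp_all add: numdefs2\<close>)
lemma ivF1_31: assumes "(223/200::real) \<le> L" "L \<le> (283/250::real)" shows "0 \<le> hfun L"
  by (rule F1_master[of "(223/200::real)" L "(283/250::real)" "(159382/51381::real)" "(7490393/10000000::real)" "(123999/1000000::real)" "(39578/12979::real)" "(644569/2500000::real)",
    OF _ _ _ exp_le_pt[where x="(14155/65536::real)" and k=1] ln_ge_pt[where x="(1831/65536::real)" and k=1] ln_le_pt[where x="(2029/32768::real)" and k=0]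
     exp_ge_pt[where x="(3405/16384::real)" and k=1] _ ln_le_pt[where x="(4201/32768::real)" and k=0]])
   (use assms in \<open>simp_all add: numdefs2\<close>)
lemma ivF1_32: assumes "(283/250::real) \<le> L" "L \<le> (1149/1000::real)" shows "0 \<le> hfun L"
  by (rule F1_master[of "(283/250::real)" L "(1149/1000::real)" "(160442/50851::real)" "(378521/500000::real)" "(347237/2500000::real)" "(19922/6423::real)" "(100253/400000::real)",
    OF _ _ _ exp_le_pt[where x="(14685/65536::real)" and k=1] ln_ge_pt[where x="(2093/65536::real)" and k=1] ln_le_pt[where x="(71/1024::real)" and k=0]
     exp_ge_pt[where x="(1769/8192::real)" and k=1] _ ln_le_pt[where x="(4085/32768::real)" and k=0]])
   (use assms in \<open>simp_all add: numdefs2\<close>)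
lemma ivF1_33: assumes "(1149/1000::real) \<le> L" "L \<le> (1167/1000::real)" shows "0 \<le> hfun L"
  by (rule F1_master[of "(1149/1000::real)" L "(1167/1000::real)" "(161562/50291::real)" "(3824929/5000000::real)" "(772253/5000000::real)" "(80218/25427::real)" "(304537/1250000::real)",
    OF _ _ _ exp_le_pt[where x="(15245/65536::real)" and k=1] ln_ge_pt[where x="(2353/65536::real)" and k=1] ln_le_pt[where x="(5051/65536::real)" and k=0]
     exp_ge_pt[where x="(7341/32768::real)" and k=1] _ ln_le_pt[where x="(993/8192::real)" and k=0]])
   (use assms in \<open>simp_all add: numdefs2\<close>)
lemma ivF1_34: assumes "(1167/1000::real) \<le> L" "L \<le> (237/200::real)" shows "0 \<le> hfun L"
  by (rule F1_master[of "(1167/1000::real)" L "(237/200::real)" "(162674/49735::real)" "(7733291/10000000::real)" "(339497/2000000::real)" "(80778/25147::real)" "(118239/500000::real)",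
    OF _ _ _ exp_le_pt[where x="(15801/65536::real)" and k=1] ln_ge_pt[where x="(1313/32768::real)" and k=1] ln_le_pt[where x="(5549/65536::real)" and k=0]
     exp_ge_pt[where x="(7621/32768::real)" and k=1] _ ln_le_pt[where x="(7713/65536::real)" and k=0]])
   (use assms in \<open>simp_all add: numdefs2\<close>)
lemma ivF1_35: assumes "(237/200::real) \<le> L" "L \<le> (1203/1000::real)" shows "0 \<le> hfun L"
  by (rule F1_master[of "(237/200::real)" L "(1203/1000::real)" "(40946/12295::real)" "(7816141/10000000::real)" "(9241/50000::real)" "(81334/24869::real)" "(2295489/10000000::real)",
    OF _ _ _ exp_le_pt[where x="(4089/16384::real)" and k=1] ln_ge_pt[where x="(2897/65536::real)" and k=1] ln_le_pt[where x="(6039/65536::real)" and k=0]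
     exp_ge_pt[where x="(7899/32768::real)" and k=1] _ ln_le_pt[where x="(7489/65536::real)" and k=0]])
   (use assms in \<open>simp_all add: numdefs2\<close>)
lemma ivF1_36: assumes "(1203/1000::real) \<le> L" "L \<le> (1221/1000::real)" shows "0 \<le> hfun L"
  by (rule F1_master[of "(1203/1000::real)" L "(1221/1000::real)" "(164886/48629::real)" "(987263/1250000::real)" "(1996967/10000000::real)" "(163778/49183::real)" "(557181/2500000::real)",
    OF _ _ _ exp_le_pt[where x="(16907/65536::real)" and k=1] ln_ge_pt[where x="(3165/65536::real)" and k=1] ln_le_pt[where x="(3261/32768::real)" and k=0]
     exp_ge_pt[where x="(16353/65536::real)" and k=1] _ ln_le_pt[where x="(7273/65536::real)" and k=0]])
   (use assms in \<open>simp_all add: numdefs2\<close>)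
lemma ivF1_37: assumes "(1221/1000::real) \<le> L" "L \<le> (1239/1000::real)" shows "0 \<le> hfun L"
  by (rule F1_master[of "(1221/1000::real)" L "(1239/1000::real)" "(165986/48079::real)" "(7979487/10000000::real)" "(267897/1250000::real)" "(20610/6079::real)" "(2163861/10000000::real)",
    OF _ _ _ exp_le_pt[where x="(17457/65536::real)" and k=1] ln_ge_pt[where x="(3431/65536::real)" and k=1] ln_le_pt[where x="(1749/16384::real)" and k=0]
     exp_ge_pt[where x="(2113/8192::real)" and k=1] _ ln_le_pt[where x="(7063/65536::real)" and k=0]])
   (use assms in \<open>simp_all add: numdefs2\<close>)
lemma ivF1_38: assumes "(1239/1000::real) \<le> L" "L \<le> (1257/1000::real)" shows "0 \<le> hfun L"
  by (rule F1_master[of "(1239/1000::real)" L "(1257/1000::real)" "(167078/47533::real)" "(4029993/5000000::real)" "(45749/200000::real)" "(82990/24041::real)" "(2101203/10000000::real)",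
    OF _ _ _ exp_le_pt[where x="(18003/65536::real)" and k=1] ln_ge_pt[where x="(1847/32768::real)" and k=1] ln_le_pt[where x="(7463/65536::real)" and k=0]
     exp_ge_pt[where x="(8727/32768::real)" and k=1] _ ln_le_pt[where x="(1715/16384::real)" and k=0]])
   (use assms in \<open>simp_all add: numdefs2\<close>)
lemma ivF1_39: assumes "(1257/1000::real) \<le> L" "L \<le> (51/40::real)" shows "0 \<le> hfun L"
  by (rule F1_master[of "(1257/1000::real)" L "(51/40::real)" "(168166/46989::real)" "(1628043/2000000::real)" "(2429483/10000000::real)" "(10442/2971::real)" "(408149/2000000::real)",
    OF _ _ _ exp_le_pt[where x="(18547/65536::real)" and k=1] ln_ge_pt[where x="(989/16384::real)" and k=1] ln_le_pt[where x="(3961/32768::real)" and k=0]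
     exp_ge_pt[where x="(1125/4096::real)" and k=1] _ ln_le_pt[where x="(833/8192::real)" and k=0]])
   (use assms in \<open>simp_all add: numdefs2\<close>)
lemma ivF1_40: assumes "(51/40::real) \<le> L" "L \<le> (1293/1000::real)" shows "0 \<le> hfun L"
  by (rule F1_master[of "(51/40::real)" L "(1293/1000::real)" "(169250/46447::real)" "(2054891/2500000::real)" "(2569899/10000000::real)" "(10510/2937::real)" "(396373/2000000::real)",
    OF _ _ _ exp_le_pt[where x="(19089/65536::real)" and k=1] ln_ge_pt[where x="(4215/65536::real)" and k=1] ln_le_pt[where x="(8375/65536::real)" and k=0]
     exp_ge_pt[where x="(1159/4096::real)" and k=1] _ ln_le_pt[where x="(6473/65536::real)" and k=0]])
   (use assms in \<open>simp_all add: numdefs2\<close>)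
lemma ivF1_41: assumes "(1293/1000::real) \<le> L" "L \<le> (164/125::real)" shows "0 \<le> hfun L"
  by (rule F1_master[of "(1293/1000::real)" L "(164/125::real)" "(170386/45879::real)" "(8298341/10000000::real)" "(135777/500000::real)" "(84622/23225::real)" "(77007/400000::real)",
    OF _ _ _ exp_le_pt[where x="(19657/65536::real)" and k=1] ln_ge_pt[where x="(559/8192::real)" and k=1] ln_le_pt[where x="(2211/16384::real)" and k=0]
     exp_ge_pt[where x="(9543/32768::real)" and k=1] _ ln_le_pt[where x="(6289/65536::real)" and k=0]])
   (use assms in \<open>simp_all add: numdefs2\<close>)
lemma ivF1_42: assumes "(164/125::real) \<le> L" "L \<le> (1331/1000::real)" shows "0 \<le> hfun L"
  by (rule F1_master[of "(164/125::real)" L "(1331/1000::real)" "(85758/22657::real)" "(8380841/10000000::real)" "(7149/25000::real)" "(85190/22941::real)" "(1866977/10000000::real)",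
    OF _ _ _ exp_le_pt[where x="(10111/32768::real)" and k=1] ln_ge_pt[where x="(4741/65536::real)" and k=1] ln_le_pt[where x="(9307/65536::real)" and k=0]
     exp_ge_pt[where x="(9827/32768::real)" and k=1] _ ln_le_pt[where x="(1525/16384::real)" and k=0]])
   (use assms in \<open>simp_all add: numdefs2\<close>)
lemma ivF1_43: assumes "(1331/1000::real) \<le> L" "L \<le> (27/20::real)" shows "0 \<le> hfun L"
  by (rule F1_master[of "(1331/1000::real)" L "(27/20::real)" "(172638/44753::real)" "(1057847/1250000::real)" "(1500573/5000000::real)" "(171510/45317::real)" "(452741/2500000::real)",
    OF _ _ _ exp_le_pt[where x="(20783/65536::real)" and k=1] ln_ge_pt[where x="(313/4096::real)" and k=1] ln_le_pt[where x="(9761/65536::real)" and k=0]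
     exp_ge_pt[where x="(20219/65536::real)" and k=1] _ ln_le_pt[where x="(2959/32768::real)" and k=0]])
   (use assms in \<open>simp_all add: numdefs2\<close>)
lemma ivF1_44: assumes "(27/20::real) \<le> L" "L \<le> (1369/1000::real)" shows "0 \<le> hfun L"
  by (rule F1_master[of "(27/20::real)" L "(1369/1000::real)" "(86878/22097::real)" "(2136037/2500000::real)" "(628223/2000000::real)" "(43158/11189::real)" "(70273/400000::real)",
    OF _ _ _ exp_le_pt[where x="(10671/32768::real)" and k=1] ln_ge_pt[where x="(5273/65536::real)" and k=1] ln_le_pt[where x="(10209/65536::real)" and k=0]
     exp_ge_pt[where x="(5195/16384::real)" and k=1] _ ln_le_pt[where x="(2871/32768::real)" and k=0]])
   (use assms in \<open>simp_all add: numdefs2\<close>)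
lemma ivF1_45: assumes "(1369/1000::real) \<le> L" "L \<le> (1389/1000::real)" shows "0 \<le> hfun L"
  by (rule F1_master[of "(1369/1000::real)" L "(1389/1000::real)" "(131252/32723::real)" "(2156163/2500000::real)" "(3286091/10000000::real)" "(173750/44197::real)" "(213031/1250000::real)",
    OF _ _ _ exp_le_pt[where x="(45/32768::real)" and k=2] ln_ge_pt[where x="(5535/65536::real)" and k=1] ln_le_pt[where x="(667/4096::real)" and k=0]
     exp_ge_pt[where x="(21339/65536::real)" and k=1] _ ln_le_pt[where x="(5571/65536::real)" and k=0]])
   (use assms in \<open>simp_all add: numdefs2\<close>)
lemma ivF1_46: assumes "(1389/1000::real) \<le> L" "L \<le> (1409/1000::real)" shows "0 \<le> hfun L"
  by (rule F1_master[of "(1389/1000::real)" L "(1409/1000::real)" "(265124/64791::real)" "(8708593/10000000::real)" "(3428897/10000000::real)" "(262492/65449::real)" "(41277/250000::real)",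
    OF _ _ _ exp_le_pt[where x="(745/65536::real)" and k=2] ln_ge_pt[where x="(363/4096::real)" and k=1] ln_le_pt[where x="(11127/65536::real)" and k=0]
     exp_ge_pt[where x="(87/65536::real)" and k=2] _ ln_le_pt[where x="(2699/32768::real)" and k=0]])
   (use assms in \<open>simp_all add: numdefs2\<close>)
lemma ivF1_47: assumes "(1409/1000::real) \<le> L" "L \<le> (1429/1000::real)" shows "0 \<le> hfun L"
  by (rule F1_master[of "(1409/1000::real)" L "(1429/1000::real)" "(267748/64135::real)" "(4395991/5000000::real)" "(892461/2500000::real)" "(132556/32397::real)" "(799889/5000000::real)",
    OF _ _ _ exp_le_pt[where x="(1401/65536::real)" and k=2] ln_ge_pt[where x="(6079/65536::real)" and k=1] ln_le_pt[where x="(11575/65536::real)" and k=0]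
     exp_ge_pt[where x="(371/32768::real)" and k=2] _ ln_le_pt[where x="(5231/65536::real)" and k=0]])
   (use assms in \<open>simp_all add: numdefs2\<close>)
lemma ivF1_48: assumes "(1429/1000::real) \<le> L" "L \<le> (29/20::real)" shows "0 \<le> hfun L"
  by (rule F1_master[of "(1429/1000::real)" L "(29/20::real)" "(33812/7931::real)" "(8874511/10000000::real)" "(3715881/10000000::real)" "(133868/32069::real)" "(1550033/10000000::real)",
    OF _ _ _ exp_le_pt[where x="(261/8192::real)" and k=2] ln_ge_pt[where x="(6347/65536::real)" and k=1] ln_le_pt[where x="(6019/32768::real)" and k=0]
     exp_ge_pt[where x="(699/32768::real)" and k=2] _ ln_le_pt[where x="(5069/65536::real)" and k=0]])
   (use assms in \<open>simp_all add: numdefs2\<close>)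
lemma ivF1_49: assumes "(29/20::real) \<le> L" "L \<le> (1471/1000::real)" shows "0 \<le> hfun L"
  by (rule F1_master[of "(29/20::real)" L "(1471/1000::real)" "(273244/62761::real)" "(4480403/5000000::real)" "(192973/500000::real)" "(270484/63451::real)" "(374923/2500000::real)",
    OF _ _ _ exp_le_pt[where x="(2775/65536::real)" and k=2] ln_ge_pt[where x="(6627/65536::real)" and k=1] ln_le_pt[where x="(3123/16384::real)" and k=0]
     exp_ge_pt[where x="(2085/65536::real)" and k=2] _ ln_le_pt[where x="(4905/65536::real)" and k=0]])
   (use assms in \<open>simp_all add: numdefs2\<close>)
lemma ivF1_50: assumes "(1471/1000::real) \<le> L" "L \<le> (1493/1000::real)" shows "0 \<le> hfun L"
  by (rule F1_master[of "(1471/1000::real)" L "(1493/1000::real)" "(276124/62041::real)" "(4522971/5000000::real)" "(100197/250000::real)" "(68308/15691::real)" "(1451211/10000000::real)",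
    OF _ _ _ exp_le_pt[where x="(3495/65536::real)" and k=2] ln_ge_pt[where x="(6903/65536::real)" and k=1] ln_le_pt[where x="(405/2048::real)" and k=0]
     exp_ge_pt[where x="(693/16384::real)" and k=2] _ ln_le_pt[where x="(4747/65536::real)" and k=0]])
   (use assms in \<open>simp_all add: numdefs2\<close>)
lemma ivF1_51: assumes "(1493/1000::real) \<le> L" "L \<le> (303/200::real)" shows "0 \<le> hfun L"
  by (rule F1_master[of "(1493/1000::real)" L "(303/200::real)" "(278996/61323::real)" "(9134861/10000000::real)" "(1038547/2500000::real)" "(69028/15511::real)" "(701067/5000000::real)",
    OF _ _ _ exp_le_pt[where x="(4213/65536::real)" and k=2] ln_ge_pt[where x="(7191/65536::real)" and k=1] ln_le_pt[where x="(3355/16384::real)" and k=0]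
     exp_ge_pt[where x="(873/16384::real)" and k=2] _ ln_le_pt[where x="(4587/65536::real)" and k=0]])
   (use assms in \<open>simp_all add: numdefs2\<close>)
lemma ivF1_52: assumes "(303/200::real) \<le> L" "L \<le> (769/500::real)" shows "0 \<le> hfun L"
  by (rule F1_master[of "(303/200::real)" L "(769/500::real)" "(281996/60573::real)" "(922263/1000000::real)" "(4305089/10000000::real)" "(139492/30663::real)" "(677457/5000000::real)",
    OF _ _ _ exp_le_pt[where x="(4963/65536::real)" and k=2] ln_ge_pt[where x="(7475/65536::real)" and k=1] ln_le_pt[where x="(13893/65536::real)" and k=0]
     exp_ge_pt[where x="(2105/32768::real)" and k=2] _ ln_le_pt[where x="(4433/65536::real)" and k=0]])
   (use assms in \<open>simp_all add: numdefs2\<close>)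
lemma ivF1_53: assumes "(769/500::real) \<le> L" "L \<le> (781/500::real)" shows "0 \<le> hfun L"
  by (rule F1_master[of "(769/500::real)" L "(781/500::real)" "(17820/3737::real)" "(4656791/5000000::real)" "(4459681/10000000::real)" "(8812/1893::real)" "(326927/2500000::real)",
    OF _ _ _ exp_le_pt[where x="(359/4096::real)" and k=2] ln_ge_pt[where x="(7769/65536::real)" and k=1] ln_le_pt[where x="(1797/8192::real)" and k=0]
     exp_ge_pt[where x="(155/2048::real)" and k=2] _ ln_le_pt[where x="(4279/65536::real)" and k=0]])
   (use assms in \<open>simp_all add: numdefs2\<close>)
lemma ivF1_54: assumes "(781/500::real) \<le> L" "L \<le> (1587/1000::real)" shows "0 \<le> hfun L"
  by (rule F1_master[of "(781/500::real)" L "(1587/1000::real)" "(72092/14745::real)" "(9407731/10000000::real)" "(230933/500000::real)" "(285108/59795::real)" "(9843/78125::real)",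
    OF _ _ _ exp_le_pt[where x="(1639/16384::real)" and k=2] ln_ge_pt[where x="(8073/65536::real)" and k=1] ln_le_pt[where x="(14871/65536::real)" and k=0]
     exp_ge_pt[where x="(5741/65536::real)" and k=2] _ ln_le_pt[where x="(4123/65536::real)" and k=0]])
   (use assms in \<open>simp_all add: numdefs2\<close>)
lemma ivF1_55: assumes "(1587/1000::real) \<le> L" "L \<le> (1613/1000::real)" shows "0 \<le> hfun L"
  by (rule F1_master[of "(1587/1000::real)" L "(1613/1000::real)" "(291740/58137::real)" "(9504781/10000000::real)" "(14941/31250::real)" "(288356/58983::real)" "(1212421/10000000::real)",
    OF _ _ _ exp_le_pt[where x="(7399/65536::real)" and k=2] ln_ge_pt[where x="(4193/32768::real)" and k=1] ln_le_pt[where x="(15375/65536::real)" and k=0]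
     exp_ge_pt[where x="(6553/65536::real)" and k=2] _ ln_le_pt[where x="(31/512::real)" and k=0]])
   (use assms in \<open>simp_all add: numdefs2\<close>)
lemma ivF1_56: assumes "(1613/1000::real) \<le> L" "L \<le> (41/25::real)" shows "0 \<le> hfun L"
  by (rule F1_master[of "(1613/1000::real)" L "(41/25::real)" "(295228/57265::real)" "(2401187/2500000::real)" "(61839/125000::real)" "(72932/14535::real)" "(582629/5000000::real)",
    OF _ _ _ exp_le_pt[where x="(8271/65536::real)" and k=2] ln_ge_pt[where x="(2177/16384::real)" and k=1] ln_le_pt[where x="(993/4096::real)" and k=0]
     exp_ge_pt[where x="(1849/16384::real)" and k=2] _ ln_le_pt[where x="(1907/32768::real)" and k=0]])
   (use assms in \<open>simp_all add: numdefs2\<close>)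
lemma ivF1_57: assumes "(41/25::real) \<le> L" "L \<le> (417/250::real)" shows "0 \<le> hfun L"
  by (rule F1_master[of "(41/25::real)" L "(417/250::real)" "(74708/14091::real)" "(75841/78125::real)" "(1279099/2500000::real)" "(73804/14317::real)" "(1118107/10000000::real)",
    OF _ _ _ exp_le_pt[where x="(2293/16384::real)" and k=2] ln_ge_pt[where x="(9039/65536::real)" and k=1] ln_le_pt[where x="(16409/65536::real)" and k=0]
     exp_ge_pt[where x="(2067/16384::real)" and k=2] _ ln_le_pt[where x="(915/16384::real)" and k=0]])
   (use assms in \<open>simp_all add: numdefs2\<close>)
lemma ivF1_58: assumes "(417/250::real) \<le> L" "L \<le> (1697/1000::real)" shows "0 \<le> hfun L"
  by (rule F1_master[of "(417/250::real)" L "(1697/1000::real)" "(151276/27717::real)" "(9813187/10000000::real)" "(5288681/10000000::real)" "(298820/56367::real)" "(1071581/10000000::real)",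
    OF _ _ _ exp_le_pt[where x="(5051/32768::real)" and k=2] ln_ge_pt[where x="(4689/32768::real)" and k=1] ln_le_pt[where x="(16937/65536::real)" and k=0]
     exp_ge_pt[where x="(9169/65536::real)" and k=2] _ ln_le_pt[where x="(877/16384::real)" and k=0]])
   (use assms in \<open>simp_all add: numdefs2\<close>)
lemma ivF1_59: assumes "(1697/1000::real) \<le> L" "L \<le> (216/125::real)" shows "0 \<le> hfun L"
  by (rule F1_master[of "(1697/1000::real)" L "(216/125::real)" "(306508/54445::real)" "(9921381/10000000::real)" "(109399/200000::real)" "(302540/55437::real)" "(1025373/10000000::real)",
    OF _ _ _ exp_le_pt[where x="(11091/65536::real)" and k=2] ln_ge_pt[where x="(9725/65536::real)" and k=1] ln_le_pt[where x="(8745/32768::real)" and k=0]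
     exp_ge_pt[where x="(10099/65536::real)" and k=2] _ ln_le_pt[where x="(3357/65536::real)" and k=0]])
   (use assms in \<open>simp_all add: numdefs2\<close>)
lemma ivF1_60: assumes "(216/125::real) \<le> L" "L \<le> (44/25::real)" shows "0 \<le> hfun L"
  by (rule F1_master[of "(216/125::real)" L "(44/25::real)" "(310572/53429::real)" "(627211/625000::real)" "(5653421/10000000::real)" "(19156/3403::real)" "(97887/1000000::real)",
    OF _ _ _ exp_le_pt[where x="(12107/65536::real)" and k=2] ln_ge_pt[where x="(5045/32768::real)" and k=1] ln_le_pt[where x="(18047/65536::real)" and k=0]
     exp_ge_pt[where x="(693/4096::real)" and k=2] _ ln_le_pt[where x="(3205/65536::real)" and k=0]])
   (use assms in \<open>simp_all add: numdefs2\<close>)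
lemma ivF1_61: assumes "(44/25::real) \<le> L" "L \<le> (897/500::real)" shows "0 \<le> hfun L"
  by (rule F1_master[of "(44/25::real)" L "(897/500::real)" "(314860/52357::real)" "(2538019/2500000::real)" "(1168959/2000000::real)" "(38820/6679::real)" "(932683/10000000::real)",
    OF _ _ _ exp_le_pt[where x="(13179/65536::real)" and k=2] ln_ge_pt[where x="(10463/65536::real)" and k=1] ln_le_pt[where x="(18625/65536::real)" and k=0]
     exp_ge_pt[where x="(1513/8192::real)" and k=2] _ ln_le_pt[where x="(1527/32768::real)" and k=0]])
   (use assms in \<open>simp_all add: numdefs2\<close>)
lemma ivF1_62: assumes "(897/500::real) \<le> L" "L \<le> (183/100::real)" shows "0 \<le> hfun L"
  by (rule F1_master[of "(897/500::real)" L "(183/100::real)" "(319372/51229::real)" "(5137321/5000000::real)" "(241729/400000::real)" "(39356/6545::real)" "(221703/2500000::real)",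
    OF _ _ _ exp_le_pt[where x="(14307/65536::real)" and k=2] ln_ge_pt[where x="(5427/32768::real)" and k=1] ln_le_pt[where x="(19221/65536::real)" and k=0]
     exp_ge_pt[where x="(1647/8192::real)" and k=2] _ ln_le_pt[where x="(363/8192::real)" and k=0]])
   (use assms in \<open>simp_all add: numdefs2\<close>)
lemma ivF1_63: assumes "(183/100::real) \<le> L" "L \<le> (467/250::real)" shows "0 \<le> hfun L"
  by (rule F1_master[of "(183/100::real)" L "(467/250::real)" "(2532/391::real)" "(10402489/10000000::real)" "(6248863/10000000::real)" "(9980/1601::real)" "(420169/5000000::real)",
    OF _ _ _ exp_le_pt[where x="(121/512::real)" and k=2] ln_ge_pt[where x="(11261/65536::real)" and k=1] ln_le_pt[where x="(19835/65536::real)" and k=0]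
     exp_ge_pt[where x="(447/2048::real)" and k=2] _ ln_le_pt[where x="(43/1024::real)" and k=0]])
   (use assms in \<open>simp_all add: numdefs2\<close>)
lemma ivF1_64: assumes "(467/250::real) \<le> L" "L \<le> (1909/1000::real)" shows "0 \<le> hfun L"
  by (rule F1_master[of "(467/250::real)" L "(1909/1000::real)" "(164572/24393::real)" "(421439/400000::real)" "(3232967/5000000::real)" "(324084/50051::real)" "(397243/5000000::real)",
    OF _ _ _ exp_le_pt[where x="(8375/32768::real)" and k=2] ln_ge_pt[where x="(11685/65536::real)" and k=1] ln_le_pt[where x="(20479/65536::real)" and k=0]
     exp_ge_pt[where x="(15485/65536::real)" and k=2] _ ln_le_pt[where x="(1301/32768::real)" and k=0]])
   (use assms in \<open>simp_all add: numdefs2\<close>)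
lemma ivF1_65: assumes "(1909/1000::real) \<le> L" "L \<le> (1953/1000::real)" shows "0 \<le> hfun L"
  by (rule F1_master[of "(1909/1000::real)" L "(1953/1000::real)" "(167252/23723::real)" "(2135599/2000000::real)" "(1673421/2500000::real)" "(329132/48789::real)" "(74803/1000000::real)",
    OF _ _ _ exp_le_pt[where x="(9045/32768::real)" and k=2] ln_ge_pt[where x="(12135/65536::real)" and k=1] ln_le_pt[where x="(10575/32768::real)" and k=0]
     exp_ge_pt[where x="(16747/65536::real)" and k=2] _ ln_le_pt[where x="(1225/32768::real)" and k=0]])
   (use assms in \<open>simp_all add: numdefs2\<close>)
lemma ivF1_66: assumes "(1953/1000::real) \<le> L" "L \<le> (2001/1000::real)" shows "0 \<le> hfun L"
  by (rule F1_master[of "(1953/1000::real)" L "(2001/1000::real)" "(340276/46003::real)" "(2165599/2000000::real)" "(6936661/10000000::real)" "(334492/47449::real)" "(701277/10000000::real)",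
    OF _ _ _ exp_le_pt[where x="(19533/65536::real)" and k=2] ln_ge_pt[where x="(12609/65536::real)" and k=1] ln_le_pt[where x="(17/65536::real)" and k=1]
     exp_ge_pt[where x="(18087/65536::real)" and k=2] _ ln_le_pt[where x="(2297/65536::real)" and k=0]])
   (use assms in \<open>simp_all add: numdefs2\<close>)
lemma ivF1_67: assumes "(2001/1000::real) \<le> L" "L \<le> (2053/1000::real)" shows "0 \<le> hfun L"
  by (rule F1_master[of "(2001/1000::real)" L "(2053/1000::real)" "(346436/44463::real)" "(10989237/10000000::real)" "(7193023/10000000::real)" "(170132/23003::real)" "(4087/62500::real)",
    OF _ _ _ exp_le_pt[where x="(21073/65536::real)" and k=2] ln_ge_pt[where x="(13117/65536::real)" and k=1] ln_le_pt[where x="(857/65536::real)" and k=1]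
     exp_ge_pt[where x="(9765/32768::real)" and k=2] _ ln_le_pt[where x="(1071/32768::real)" and k=0]])
   (use assms in \<open>simp_all add: numdefs2\<close>)
lemma ivF1_68: assumes "(2053/1000::real) \<le> L" "L \<le> (211/100::real)" shows "0 \<le> hfun L"
  by (rule F1_master[of "(2053/1000::real)" L "(211/100::real)" "(532312/64533::real)" "(11161209/10000000::real)" "(466699/625000::real)" "(173212/22233::real)" "(606571/10000000::real)",
    OF _ _ _ exp_le_pt[where x="(1003/65536::real)" and k=3] ln_ge_pt[where x="(13657/65536::real)" and k=1] ln_le_pt[where x="(1755/65536::real)" and k=1]
     exp_ge_pt[where x="(10535/32768::real)" and k=2] _ ln_le_pt[where x="(1987/65536::real)" and k=0]])
   (use assms in \<open>simp_all add: numdefs2\<close>)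
lemma ivF1_69: assumes "(211/100::real) \<le> L" "L \<le> (543/250::real)" shows "0 \<le> hfun L"
  by (rule F1_master[of "(211/100::real)" L "(543/250::real)" "(68568/7813::real)" "(709123/625000::real)" "(310261/400000::real)" "(66536/8067::real)" "(558923/10000000::real)",
    OF _ _ _ exp_le_pt[where x="(379/8192::real)" and k=3] ln_ge_pt[where x="(14235/65536::real)" and k=1] ln_le_pt[where x="(1351/32768::real)" and k=1]
     exp_ge_pt[where x="(125/8192::real)" and k=3] _ ln_le_pt[where x="(1831/65536::real)" and k=0]])
   (use assms in \<open>simp_all add: numdefs2\<close>)
lemma ivF1_70: assumes "(543/250::real) \<le> L" "L \<le> (2241/1000::real)" shows "0 \<le> hfun L"
  by (rule F1_master[of "(543/250::real)" L "(2241/1000::real)" "(141640/15063::real)" "(11543373/10000000::real)" "(8069479/10000000::real)" "(548520/62507::real)" "(511587/10000000::real)",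
    OF _ _ _ exp_le_pt[where x="(1321/16384::real)" and k=3] ln_ge_pt[where x="(7425/32768::real)" and k=1] ln_le_pt[where x="(3725/65536::real)" and k=1]
     exp_ge_pt[where x="(3029/65536::real)" and k=3] _ ln_le_pt[where x="(419/16384::real)" and k=0]])
   (use assms in \<open>simp_all add: numdefs2\<close>)
lemma ivF1_71: assumes "(2241/1000::real) \<le> L" "L \<le> (1159/500::real)" shows "0 \<le> hfun L"
  by (rule F1_master[of "(2241/1000::real)" L "(1159/500::real)" "(293272/28877::real)" "(11758797/10000000::real)" "(8407229/10000000::real)" "(566536/60255::real)" "(463951/10000000::real)",
    OF _ _ _ exp_le_pt[where x="(3891/32768::real)" and k=3] ln_ge_pt[where x="(7759/32768::real)" and k=1] ln_le_pt[where x="(4827/65536::real)" and k=1]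
     exp_ge_pt[where x="(5281/65536::real)" and k=3] _ ln_le_pt[where x="(95/4096::real)" and k=0]])
   (use assms in \<open>simp_all add: numdefs2\<close>)
lemma ivF1_72: assumes "(1159/500::real) \<le> L" "L \<le> (481/200::real)" shows "0 \<le> hfun L"
  by (rule F1_master[of "(1159/500::real)" L "(481/200::real)" "(38056/3435::real)" "(11993529/10000000::real)" "(8775671/10000000::real)" "(586520/57757::real)" "(1301/31250::real)",
    OF _ _ _ exp_le_pt[where x="(661/4096::real)" and k=3] ln_ge_pt[where x="(8121/32768::real)" and k=1] ln_le_pt[where x="(3013/32768::real)" and k=1]
     exp_ge_pt[where x="(7779/65536::real)" and k=3] _ ln_le_pt[where x="(341/16384::real)" and k=0]])
   (use assms in \<open>simp_all add: numdefs2\<close>)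
lemma ivF1_73: assumes "(481/200::real) \<le> L" "L \<le> (501/200::real)" shows "0 \<le> hfun L"
  by (rule F1_master[of "(481/200::real)" L "(501/200::real)" "(634200/51797::real)" "(12252211/10000000::real)" "(9183063/10000000::real)" "(608872/54963::real)" "(73739/2000000::real)",
    OF _ _ _ exp_le_pt[where x="(13739/65536::real)" and k=3] ln_ge_pt[where x="(17035/65536::real)" and k=1] ln_le_pt[where x="(7347/65536::real)" and k=1]
     exp_ge_pt[where x="(10573/65536::real)" and k=3] _ ln_le_pt[where x="(151/8192::real)" and k=0]])
   (use assms in \<open>simp_all add: numdefs2\<close>)
lemma ivF1_74: assumes "(501/200::real) \<le> L" "L \<le> (131/50::real)" shows "0 \<le> hfun L"
  by (rule F1_master[of "(501/200::real)" L "(131/50::real)" "(662648/48241::real)" "(6270829/5000000::real)" "(9631783/10000000::real)" "(79272/6475::real)" "(321073/10000000::real)",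
    OF _ _ _ exp_le_pt[where x="(17295/65536::real)" and k=3] ln_ge_pt[where x="(4479/16384::real)" and k=1] ln_le_pt[where x="(8795/65536::real)" and k=1]
     exp_ge_pt[where x="(1717/8192::real)" and k=3] _ ln_le_pt[where x="(263/16384::real)" and k=0]])
   (use assms in \<open>simp_all add: numdefs2\<close>)
lemma ivF1_75: assumes "(131/50::real) \<le> L" "L \<le> (1377/500::real)" shows "0 \<le> hfun L"
  by (rule F1_master[of "(131/50::real)" L "(1377/500::real)" "(86840/5529::real)" "(2572937/2000000::real)" "(10130787/10000000::real)" "(165656/12061::real)" "(274371/10000000::real)",
    OF _ _ _ exp_le_pt[where x="(2663/8192::real)" and k=3] ln_ge_pt[where x="(18891/65536::real)" and k=1] ln_le_pt[where x="(10395/65536::real)" and k=1]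
     exp_ge_pt[where x="(4323/16384::real)" and k=3] _ ln_le_pt[where x="(899/65536::real)" and k=0]])
   (use assms in \<open>simp_all add: numdefs2\<close>)
lemma ivF1_76: assumes "(1377/500::real) \<le> L" "L \<le> (1457/500::real)" shows "0 \<le> hfun L"
  by (rule F1_master[of "(1377/500::real)" L "(1457/500::real)" "(280656/15227::real)" "(1653509/1250000::real)" "(10695381/10000000::real)" "(694696/44235::real)" "(228587/10000000::real)",
    OF _ _ _ exp_le_pt[where x="(1157/16384::real)" and k=4] ln_ge_pt[where x="(19977/65536::real)" and k=1] ln_le_pt[where x="(6095/32768::real)" and k=1]
     exp_ge_pt[where x="(21301/65536::real)" and k=3] _ ln_le_pt[where x="(749/65536::real)" and k=0]])
   (use assms in \<open>simp_all add: numdefs2\<close>)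
lemma ivF1_77: assumes "(1457/500::real) \<le> L" "L \<le> (1553/500::real)" shows "0 \<le> hfun L"
  by (rule F1_master[of "(1457/500::real)" L "(1553/500::real)" "(1221808/54709::real)" "(6822629/5000000::real)" "(11333481/10000000::real)" "(1122576/60911::real)" "(184637/10000000::real)",
    OF _ _ _ exp_le_pt[where x="(10827/65536::real)" and k=4] ln_ge_pt[where x="(21209/65536::real)" and k=1] ln_le_pt[where x="(3549/16384::real)" and k=1]
     exp_ge_pt[where x="(4625/65536::real)" and k=4] _ ln_le_pt[where x="(605/65536::real)" and k=0]])
   (use assms in \<open>simp_all add: numdefs2\<close>)
lemma ivF1_78: assumes "(1553/500::real) \<le> L" "L \<le> (167/50::real)" shows "0 \<le> hfun L"
  by (rule F1_master[of "(1553/500::real)" L "(167/50::real)" "(1338352/47425::real)" "(7062093/5000000::real)" "(3014979/2500000::real)" "(152720/6839::real)" "(35859/2500000::real)",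
    OF _ _ _ exp_le_pt[where x="(18111/65536::real)" and k=4] ln_ge_pt[where x="(107/8192::real)" and k=2] ln_le_pt[where x="(8223/32768::real)" and k=1]
     exp_ge_pt[where x="(1353/8192::real)" and k=4] _ ln_le_pt[where x="(235/32768::real)" and k=0]])
   (use assms in \<open>simp_all add: numdefs2\<close>)
lemma ivF1_79: assumes "(167/50::real) \<le> L" "L \<le> (1817/500::real)" shows "0 \<le> hfun L"
  by (rule F1_master[of "(167/50::real)" L "(1817/500::real)" "(1136608/30017::real)" "(14678517/10000000::real)" "(12903651/10000000::real)" "(334576/11857::real)" "(13199/1250000::real)",
    OF _ _ _ exp_le_pt[where x="(2751/32768::real)" and k=5] ln_ge_pt[where x="(2671/65536::real)" and k=2] ln_le_pt[where x="(297/1024::real)" and k=1]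
     exp_ge_pt[where x="(4527/16384::real)" and k=4] _ ln_le_pt[where x="(173/32768::real)" and k=0]])
   (use assms in \<open>simp_all add: numdefs2\<close>)
lemma ivF1_80: assumes "(1817/500::real) \<le> L" "L \<le> (4::real)" shows "0 \<le> hfun L"
  by (rule F1_master[of "(1817/500::real)" L "(4::real)" "(2644448/48433::real)" "(7667047/5000000::real)" "(2772589/2000000::real)" "(2273120/60037::real)" "(72633/10000000::real)",
    OF _ _ _ exp_le_pt[where x="(17103/65536::real)" and k=5] ln_ge_pt[where x="(1203/16384::real)" and k=2] ln_le_pt[where x="(0::real)" and k=2]
     exp_ge_pt[where x="(5499/65536::real)" and k=5] _ ln_le_pt[where x="(119/32768::real)" and k=0]])
   (use assms in \<open>simp_all add: numdefs2\<close>)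
lemma cum_0: "(1/50::real) \<le> L \<Longrightarrow> L \<le> (19/500::real) \<Longrightarrow> 0 \<le> hfun L"
  using join[OF ivF2_0 ivF2_1] by blast
lemma cum_1: "(1/50::real) \<le> L \<Longrightarrow> L \<le> (51/1000::real) \<Longrightarrow> 0 \<le> hfun L"
  using join[OF cum_0 ivF2_2] by blast
lemma cum_2: "(1/50::real) \<le> L \<Longrightarrow> L \<le> (33/500::real) \<Longrightarrow> 0 \<le> hfun L"
  using join[OF cum_1 ivF2_3] by blast
lemma cum_3: "(1/50::real) \<le> L \<Longrightarrow> L \<le> (21/250::real) \<Longrightarrow> 0 \<le> hfun L"
  using join[OF cum_2 ivF2_4] by blast
lemma cum_4: "(1/50::real) \<le> L \<Longrightarrow> L \<le> (13/125::real) \<Longrightarrow> 0 \<le> hfun L"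
  using join[OF cum_3 ivF2_5] by blast
lemma cum_5: "(1/50::real) \<le> L \<Longrightarrow> L \<le> (1/8::real) \<Longrightarrow> 0 \<le> hfun L"
  using join[OF cum_4 ivF2_6] by blast
lemma cum_6: "(1/50::real) \<le> L \<Longrightarrow> L \<le> (147/1000::real) \<Longrightarrow> 0 \<le> hfun L"
  using join[OF cum_5 ivF2_7] by blast
lemma cum_7: "(1/50::real) \<le> L \<Longrightarrow> L \<le> (169/1000::real) \<Longrightarrow> 0 \<le> hfun L"
  using join[OF cum_6 ivF2_8] by blast
lemma cum_8: "(1/50::real) \<le> L \<Longrightarrow> L \<le> (191/1000::real) \<Longrightarrow> 0 \<le> hfun L"
  using join[OF cum_7 ivF2_9] by blast
lemma cum_9: "(1/50::real) \<le> L \<Longrightarrow> L \<le> (213/1000::real) \<Longrightarrow> 0 \<le> hfun L"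
  using join[OF cum_8 ivF2_10] by blast
lemma cum_10: "(1/50::real) \<le> L \<Longrightarrow> L \<le> (47/200::real) \<Longrightarrow> 0 \<le> hfun L"
  using join[OF cum_9 ivF2_11] by blast
lemma cum_11: "(1/50::real) \<le> L \<Longrightarrow> L \<le> (32/125::real) \<Longrightarrow> 0 \<le> hfun L"
  using join[OF cum_10 ivF2_12] by blast
lemma cum_12: "(1/50::real) \<le> L \<Longrightarrow> L \<le> (277/1000::real) \<Longrightarrow> 0 \<le> hfun L"
  using join[OF cum_11 ivF2_13] by blast
lemma cum_13: "(1/50::real) \<le> L \<Longrightarrow> L \<le> (297/1000::real) \<Longrightarrow> 0 \<le> hfun L"
  using join[OF cum_12 ivF2_14] by blast
lemma cum_14: "(1/50::real) \<le> L \<Longrightarrow> L \<le> (79/250::real) \<Longrightarrow> 0 \<le> hfun L"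
  using join[OF cum_13 ivF2_15] by blast
lemma cum_15: "(1/50::real) \<le> L \<Longrightarrow> L \<le> (67/200::real) \<Longrightarrow> 0 \<le> hfun L"
  using join[OF cum_14 ivF2_16] by blast
lemma cum_16: "(1/50::real) \<le> L \<Longrightarrow> L \<le> (353/1000::real) \<Longrightarrow> 0 \<le> hfun L"
  using join[OF cum_15 ivF2_17] by blast
lemma cum_17: "(1/50::real) \<le> L \<Longrightarrow> L \<le> (37/100::real) \<Longrightarrow> 0 \<le> hfun L"
  using join[OF cum_16 ivF2_18] by blast
lemma cum_18: "(1/50::real) \<le> L \<Longrightarrow> L \<le> (387/1000::real) \<Longrightarrow> 0 \<le> hfun L"
  using join[OF cum_17 ivF2_19] by blast
lemma cum_19: "(1/50::real) \<le> L \<Longrightarrow> L \<le> (403/1000::real) \<Longrightarrow> 0 \<le> hfun L"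
  using join[OF cum_18 ivF2_20] by blast
lemma cum_20: "(1/50::real) \<le> L \<Longrightarrow> L \<le> (209/500::real) \<Longrightarrow> 0 \<le> hfun L"
  using join[OF cum_19 ivF2_21] by blast
lemma cum_21: "(1/50::real) \<le> L \<Longrightarrow> L \<le> (433/1000::real) \<Longrightarrow> 0 \<le> hfun L"
  using join[OF cum_20 ivF2_22] by blast
lemma cum_22: "(1/50::real) \<le> L \<Longrightarrow> L \<le> (447/1000::real) \<Longrightarrow> 0 \<le> hfun L"
  using join[OF cum_21 ivF2_23] by blast
lemma cum_23: "(1/50::real) \<le> L \<Longrightarrow> L \<le> (461/1000::real) \<Longrightarrow> 0 \<le> hfun L"
  using join[OF cum_22 ivF2_24] by blast
lemma cum_24: "(1/50::real) \<le> L \<Longrightarrow> L \<le> (237/500::real) \<Longrightarrow> 0 \<le> hfun L"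
  using join[OF cum_23 ivF2_25] by blast
lemma cum_25: "(1/50::real) \<le> L \<Longrightarrow> L \<le> (487/1000::real) \<Longrightarrow> 0 \<le> hfun L"
  using join[OF cum_24 ivF2_26] by blast
lemma cum_26: "(1/50::real) \<le> L \<Longrightarrow> L \<le> (499/1000::real) \<Longrightarrow> 0 \<le> hfun L"
  using join[OF cum_25 ivF2_27] by blast
lemma cum_27: "(1/50::real) \<le> L \<Longrightarrow> L \<le> (511/1000::real) \<Longrightarrow> 0 \<le> hfun L"
  using join[OF cum_26 ivF2_28] by blast
lemma cum_28: "(1/50::real) \<le> L \<Longrightarrow> L \<le> (261/500::real) \<Longrightarrow> 0 \<le> hfun L"
  using join[OF cum_27 ivF2_29] by blast
lemma cum_29: "(1/50::real) \<le> L \<Longrightarrow> L \<le> (533/1000::real) \<Longrightarrow> 0 \<le> hfun L"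
  using join[OF cum_28 ivF2_30] by blast
lemma cum_30: "(1/50::real) \<le> L \<Longrightarrow> L \<le> (68/125::real) \<Longrightarrow> 0 \<le> hfun L"
  using join[OF cum_29 ivF2_31] by blast
lemma cum_31: "(1/50::real) \<le> L \<Longrightarrow> L \<le> (277/500::real) \<Longrightarrow> 0 \<le> hfun L"
  using join[OF cum_30 ivF2_32] by blast
lemma cum_32: "(1/50::real) \<le> L \<Longrightarrow> L \<le> (141/250::real) \<Longrightarrow> 0 \<le> hfun L"
  using join[OF cum_31 ivF2_33] by blast
lemma cum_33: "(1/50::real) \<le> L \<Longrightarrow> L \<le> (287/500::real) \<Longrightarrow> 0 \<le> hfun L"
  using join[OF cum_32 ivF2_34] by blast
lemma cum_34: "(1/50::real) \<le> L \<Longrightarrow> L \<le> (583/1000::real) \<Longrightarrow> 0 \<le> hfun L"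
  using join[OF cum_33 ivF2_35] by blast
lemma cum_35: "(1/50::real) \<le> L \<Longrightarrow> L \<le> (74/125::real) \<Longrightarrow> 0 \<le> hfun L"
  using join[OF cum_34 ivF2_36] by blast
lemma cum_36: "(1/50::real) \<le> L \<Longrightarrow> L \<le> (3/5::real) \<Longrightarrow> 0 \<le> hfun L"
  using join[OF cum_35 ivF2_37] by blast
lemma cum_37: "(1/50::real) \<le> L \<Longrightarrow> L \<le> (123/200::real) \<Longrightarrow> 0 \<le> hfun L"
  using join[OF cum_36 ivF1_0] by blast
lemma cum_38: "(1/50::real) \<le> L \<Longrightarrow> L \<le> (63/100::real) \<Longrightarrow> 0 \<le> hfun L"
  using join[OF cum_37 ivF1_1] by blast
lemma cum_39: "(1/50::real) \<le> L \<Longrightarrow> L \<le> (129/200::real) \<Longrightarrow> 0 \<le> hfun L"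
  using join[OF cum_38 ivF1_2] by blast
lemma cum_40: "(1/50::real) \<le> L \<Longrightarrow> L \<le> (661/1000::real) \<Longrightarrow> 0 \<le> hfun L"
  using join[OF cum_39 ivF1_3] by blast
lemma cum_41: "(1/50::real) \<le> L \<Longrightarrow> L \<le> (677/1000::real) \<Longrightarrow> 0 \<le> hfun L"
  using join[OF cum_40 ivF1_4] by blast
lemma cum_42: "(1/50::real) \<le> L \<Longrightarrow> L \<le> (693/1000::real) \<Longrightarrow> 0 \<le> hfun L"
  using join[OF cum_41 ivF1_5] by blast
lemma cum_43: "(1/50::real) \<le> L \<Longrightarrow> L \<le> (709/1000::real) \<Longrightarrow> 0 \<le> hfun L"
  using join[OF cum_42 ivF1_6] by blast
lemma cum_44: "(1/50::real) \<le> L \<Longrightarrow> L \<le> (29/40::real) \<Longrightarrow> 0 \<le> hfun L"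
  using join[OF cum_43 ivF1_7] by blast
lemma cum_45: "(1/50::real) \<le> L \<Longrightarrow> L \<le> (741/1000::real) \<Longrightarrow> 0 \<le> hfun L"
  using join[OF cum_44 ivF1_8] by blast
lemma cum_46: "(1/50::real) \<le> L \<Longrightarrow> L \<le> (379/500::real) \<Longrightarrow> 0 \<le> hfun L"
  using join[OF cum_45 ivF1_9] by blast
lemma cum_47: "(1/50::real) \<le> L \<Longrightarrow> L \<le> (31/40::real) \<Longrightarrow> 0 \<le> hfun L"
  using join[OF cum_46 ivF1_10] by blast
lemma cum_48: "(1/50::real) \<le> L \<Longrightarrow> L \<le> (99/125::real) \<Longrightarrow> 0 \<le> hfun L"
  using join[OF cum_47 ivF1_11] by blast
lemma cum_49: "(1/50::real) \<le> L \<Longrightarrow> L \<le> (809/1000::real) \<Longrightarrow> 0 \<le> hfun L"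
  using join[OF cum_48 ivF1_12] by blast
lemma cum_50: "(1/50::real) \<le> L \<Longrightarrow> L \<le> (413/500::real) \<Longrightarrow> 0 \<le> hfun L"
  using join[OF cum_49 ivF1_13] by blast
lemma cum_51: "(1/50::real) \<le> L \<Longrightarrow> L \<le> (843/1000::real) \<Longrightarrow> 0 \<le> hfun L"
  using join[OF cum_50 ivF1_14] by blast
lemma cum_52: "(1/50::real) \<le> L \<Longrightarrow> L \<le> (43/50::real) \<Longrightarrow> 0 \<le> hfun L"
  using join[OF cum_51 ivF1_15] by blast
lemma cum_53: "(1/50::real) \<le> L \<Longrightarrow> L \<le> (877/1000::real) \<Longrightarrow> 0 \<le> hfun L"
  using join[OF cum_52 ivF1_16] by blast
lemma cum_54: "(1/50::real) \<le> L \<Longrightarrow> L \<le> (447/500::real) \<Longrightarrow> 0 \<le> hfun L"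
  using join[OF cum_53 ivF1_17] by blast
lemma cum_55: "(1/50::real) \<le> L \<Longrightarrow> L \<le> (911/1000::real) \<Longrightarrow> 0 \<le> hfun L"
  using join[OF cum_54 ivF1_18] by blast
lemma cum_56: "(1/50::real) \<le> L \<Longrightarrow> L \<le> (116/125::real) \<Longrightarrow> 0 \<le> hfun L"
  using join[OF cum_55 ivF1_19] by blast
lemma cum_57: "(1/50::real) \<le> L \<Longrightarrow> L \<le> (189/200::real) \<Longrightarrow> 0 \<le> hfun L"
  using join[OF cum_56 ivF1_20] by blast
lemma cum_58: "(1/50::real) \<le> L \<Longrightarrow> L \<le> (481/500::real) \<Longrightarrow> 0 \<le> hfun L"
  using join[OF cum_57 ivF1_21] by blast
lemma cum_59: "(1/50::real) \<le> L \<Longrightarrow> L \<le> (979/1000::real) \<Longrightarrow> 0 \<le> hfun L"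
  using join[OF cum_58 ivF1_22] by blast
lemma cum_60: "(1/50::real) \<le> L \<Longrightarrow> L \<le> (249/250::real) \<Longrightarrow> 0 \<le> hfun L"
  using join[OF cum_59 ivF1_23] by blast
lemma cum_61: "(1/50::real) \<le> L \<Longrightarrow> L \<le> (1013/1000::real) \<Longrightarrow> 0 \<le> hfun L"
  using join[OF cum_60 ivF1_24] by blast
lemma cum_62: "(1/50::real) \<le> L \<Longrightarrow> L \<le> (103/100::real) \<Longrightarrow> 0 \<le> hfun L"
  using join[OF cum_61 ivF1_25] by blast
lemma cum_63: "(1/50::real) \<le> L \<Longrightarrow> L \<le> (1047/1000::real) \<Longrightarrow> 0 \<le> hfun L"
  using join[OF cum_62 ivF1_26] by blast
lemma cum_64: "(1/50::real) \<le> L \<Longrightarrow> L \<le> (133/125::real) \<Longrightarrow> 0 \<le> hfun L"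
  using join[OF cum_63 ivF1_27] by blast
lemma cum_65: "(1/50::real) \<le> L \<Longrightarrow> L \<le> (1081/1000::real) \<Longrightarrow> 0 \<le> hfun L"
  using join[OF cum_64 ivF1_28] by blast
lemma cum_66: "(1/50::real) \<le> L \<Longrightarrow> L \<le> (549/500::real) \<Longrightarrow> 0 \<le> hfun L"
  using join[OF cum_65 ivF1_29] by blast
lemma cum_67: "(1/50::real) \<le> L \<Longrightarrow> L \<le> (223/200::real) \<Longrightarrow> 0 \<le> hfun L"
  using join[OF cum_66 ivF1_30] by blast
lemma cum_68: "(1/50::real) \<le> L \<Longrightarrow> L \<le> (283/250::real) \<Longrightarrow> 0 \<le> hfun L"
  using join[OF cum_67 ivF1_31] by blast
lemma cum_69: "(1/50::real) \<le> L \<Longrightarrow> L \<le> (1149/1000::real) \<Longrightarrow> 0 \<le> hfun L"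
  using join[OF cum_68 ivF1_32] by blast
lemma cum_70: "(1/50::real) \<le> L \<Longrightarrow> L \<le> (1167/1000::real) \<Longrightarrow> 0 \<le> hfun L"
  using join[OF cum_69 ivF1_33] by blast
lemma cum_71: "(1/50::real) \<le> L \<Longrightarrow> L \<le> (237/200::real) \<Longrightarrow> 0 \<le> hfun L"
  using join[OF cum_70 ivF1_34] by blast
lemma cum_72: "(1/50::real) \<le> L \<Longrightarrow> L \<le> (1203/1000::real) \<Longrightarrow> 0 \<le> hfun L"
  using join[OF cum_71 ivF1_35] by blast
lemma cum_73: "(1/50::real) \<le> L \<Longrightarrow> L \<le> (1221/1000::real) \<Longrightarrow> 0 \<le> hfun L"
  using join[OF cum_72 ivF1_36] by blast
lemma cum_74: "(1/50::real) \<le> L \<Longrightarrow> L \<le> (1239/1000::real) \<Longrightarrow> 0 \<le> hfun L"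
  using join[OF cum_73 ivF1_37] by blast
lemma cum_75: "(1/50::real) \<le> L \<Longrightarrow> L \<le> (1257/1000::real) \<Longrightarrow> 0 \<le> hfun L"
  using join[OF cum_74 ivF1_38] by blast
lemma cum_76: "(1/50::real) \<le> L \<Longrightarrow> L \<le> (51/40::real) \<Longrightarrow> 0 \<le> hfun L"
  using join[OF cum_75 ivF1_39] by blast
lemma cum_77: "(1/50::real) \<le> L \<Longrightarrow> L \<le> (1293/1000::real) \<Longrightarrow> 0 \<le> hfun L"
  using join[OF cum_76 ivF1_40] by blast
lemma cum_78: "(1/50::real) \<le> L \<Longrightarrow> L \<le> (164/125::real) \<Longrightarrow> 0 \<le> hfun L"
  using join[OF cum_77 ivF1_41] by blast
lemma cum_79: "(1/50::real) \<le> L \<Longrightarrow> L \<le> (1331/1000::real) \<Longrightarrow> 0 \<le> hfun L"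
  using join[OF cum_78 ivF1_42] by blast
lemma cum_80: "(1/50::real) \<le> L \<Longrightarrow> L \<le> (27/20::real) \<Longrightarrow> 0 \<le> hfun L"
  using join[OF cum_79 ivF1_43] by blast
lemma cum_81: "(1/50::real) \<le> L \<Longrightarrow> L \<le> (1369/1000::real) \<Longrightarrow> 0 \<le> hfun L"
  using join[OF cum_80 ivF1_44] by blast
lemma cum_82: "(1/50::real) \<le> L \<Longrightarrow> L \<le> (1389/1000::real) \<Longrightarrow> 0 \<le> hfun L"
  using join[OF cum_81 ivF1_45] by blast
lemma cum_83: "(1/50::real) \<le> L \<Longrightarrow> L \<le> (1409/1000::real) \<Longrightarrow> 0 \<le> hfun L"
  using join[OF cum_82 ivF1_46] by blast
lemma cum_84: "(1/50::real) \<le> L \<Longrightarrow> L \<le> (1429/1000::real) \<Longrightarrow> 0 \<le> hfun L"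
  using join[OF cum_83 ivF1_47] by blast
lemma cum_85: "(1/50::real) \<le> L \<Longrightarrow> L \<le> (29/20::real) \<Longrightarrow> 0 \<le> hfun L"
  using join[OF cum_84 ivF1_48] by blast
lemma cum_86: "(1/50::real) \<le> L \<Longrightarrow> L \<le> (1471/1000::real) \<Longrightarrow> 0 \<le> hfun L"
  using join[OF cum_85 ivF1_49] by blast
lemma cum_87: "(1/50::real) \<le> L \<Longrightarrow> L \<le> (1493/1000::real) \<Longrightarrow> 0 \<le> hfun L"
  using join[OF cum_86 ivF1_50] by blast
lemma cum_88: "(1/50::real) \<le> L \<Longrightarrow> L \<le> (303/200::real) \<Longrightarrow> 0 \<le> hfun L"
  using join[OF cum_87 ivF1_51] by blast
lemma cum_89: "(1/50::real) \<le> L \<Longrightarrow> L \<le> (769/500::real) \<Longrightarrow> 0 \<le> hfun L"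
  using join[OF cum_88 ivF1_52] by blast
lemma cum_90: "(1/50::real) \<le> L \<Longrightarrow> L \<le> (781/500::real) \<Longrightarrow> 0 \<le> hfun L"
  using join[OF cum_89 ivF1_53] by blast
lemma cum_91: "(1/50::real) \<le> L \<Longrightarrow> L \<le> (1587/1000::real) \<Longrightarrow> 0 \<le> hfun L"
  using join[OF cum_90 ivF1_54] by blast
lemma cum_92: "(1/50::real) \<le> L \<Longrightarrow> L \<le> (1613/1000::real) \<Longrightarrow> 0 \<le> hfun L"
  using join[OF cum_91 ivF1_55] by blast
lemma cum_93: "(1/50::real) \<le> L \<Longrightarrow> L \<le> (41/25::real) \<Longrightarrow> 0 \<le> hfun L"
  using join[OF cum_92 ivF1_56] by blast
lemma cum_94: "(1/50::real) \<le> L \<Longrightarrow> L \<le> (417/250::real) \<Longrightarrow> 0 \<le> hfun L"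
  using join[OF cum_93 ivF1_57] by blast
lemma cum_95: "(1/50::real) \<le> L \<Longrightarrow> L \<le> (1697/1000::real) \<Longrightarrow> 0 \<le> hfun L"
  using join[OF cum_94 ivF1_58] by blast
lemma cum_96: "(1/50::real) \<le> L \<Longrightarrow> L \<le> (216/125::real) \<Longrightarrow> 0 \<le> hfun L"
  using join[OF cum_95 ivF1_59] by blast
lemma cum_97: "(1/50::real) \<le> L \<Longrightarrow> L \<le> (44/25::real) \<Longrightarrow> 0 \<le> hfun L"
  using join[OF cum_96 ivF1_60] by blast
lemma cum_98: "(1/50::real) \<le> L \<Longrightarrow> L \<le> (897/500::real) \<Longrightarrow> 0 \<le> hfun L"
  using join[OF cum_97 ivF1_61] by blast
lemma cum_99: "(1/50::real) \<le> L \<Longrightarrow> L \<le> (183/100::real) \<Longrightarrow> 0 \<le> hfun L"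
  using join[OF cum_98 ivF1_62] by blast
lemma cum_100: "(1/50::real) \<le> L \<Longrightarrow> L \<le> (467/250::real) \<Longrightarrow> 0 \<le> hfun L"
  using join[OF cum_99 ivF1_63] by blast
lemma cum_101: "(1/50::real) \<le> L \<Longrightarrow> L \<le> (1909/1000::real) \<Longrightarrow> 0 \<le> hfun L"
  using join[OF cum_100 ivF1_64] by blast
lemma cum_102: "(1/50::real) \<le> L \<Longrightarrow> L \<le> (1953/1000::real) \<Longrightarrow> 0 \<le> hfun L"
  using join[OF cum_101 ivF1_65] by blast
lemma cum_103: "(1/50::real) \<le> L \<Longrightarrow> L \<le> (2001/1000::real) \<Longrightarrow> 0 \<le> hfun L"
  using join[OF cum_102 ivF1_66] by blast
lemma cum_104: "(1/50::real) \<le> L \<Longrightarrow> L \<le> (2053/1000::real) \<Longrightarrow> 0 \<le> hfun L"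
  using join[OF cum_103 ivF1_67] by blast
lemma cum_105: "(1/50::real) \<le> L \<Longrightarrow> L \<le> (211/100::real) \<Longrightarrow> 0 \<le> hfun L"
  using join[OF cum_104 ivF1_68] by blast
lemma cum_106: "(1/50::real) \<le> L \<Longrightarrow> L \<le> (543/250::real) \<Longrightarrow> 0 \<le> hfun L"
  using join[OF cum_105 ivF1_69] by blast
lemma cum_107: "(1/50::real) \<le> L \<Longrightarrow> L \<le> (2241/1000::real) \<Longrightarrow> 0 \<le> hfun L"
  using join[OF cum_106 ivF1_70] by blast
lemma cum_108: "(1/50::real) \<le> L \<Longrightarrow> L \<le> (1159/500::real) \<Longrightarrow> 0 \<le> hfun L"
  using join[OF cum_107 ivF1_71] by blast
lemma cum_109: "(1/50::real) \<le> L \<Longrightarrow> L \<le> (481/200::real) \<Longrightarrow> 0 \<le> hfun L"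
  using join[OF cum_108 ivF1_72] by blast
lemma cum_110: "(1/50::real) \<le> L \<Longrightarrow> L \<le> (501/200::real) \<Longrightarrow> 0 \<le> hfun L"
  using join[OF cum_109 ivF1_73] by blast
lemma cum_111: "(1/50::real) \<le> L \<Longrightarrow> L \<le> (131/50::real) \<Longrightarrow> 0 \<le> hfun L"
  using join[OF cum_110 ivF1_74] by blast
lemma cum_112: "(1/50::real) \<le> L \<Longrightarrow> L \<le> (1377/500::real) \<Longrightarrow> 0 \<le> hfun L"
  using join[OF cum_111 ivF1_75] by blast
lemma cum_113: "(1/50::real) \<le> L \<Longrightarrow> L \<le> (1457/500::real) \<Longrightarrow> 0 \<le> hfun L"
  using join[OF cum_112 ivF1_76] by blast
lemma cum_114: "(1/50::real) \<le> L \<Longrightarrow> L \<le> (1553/500::real) \<Longrightarrow> 0 \<le> hfun L"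
  using join[OF cum_113 ivF1_77] by blast
lemma cum_115: "(1/50::real) \<le> L \<Longrightarrow> L \<le> (167/50::real) \<Longrightarrow> 0 \<le> hfun L"
  using join[OF cum_114 ivF1_78] by blast
lemma cum_116: "(1/50::real) \<le> L \<Longrightarrow> L \<le> (1817/500::real) \<Longrightarrow> 0 \<le> hfun L"
  using join[OF cum_115 ivF1_79] by blast
lemma cum_117: "(1/50::real) \<le> L \<Longrightarrow> L \<le> (4::real) \<Longrightarrow> 0 \<le> hfun L"
  using join[OF cum_116 ivF1_80] by blast
lemma hfun_mid: "(1/50::real) \<le> L \<Longrightarrow> L \<le> (4::real) \<Longrightarrow> 0 \<le> hfun L"
  using cum_117 by blast


lemma exp_le_inv1: fixes L :: real assumes "L < 1" shows "exp L \<le> 1/(1-L)"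
proof -
  have "1 - L \<le> exp (-L)" using exp_ge_add_one_self[of "-L"] by simp
  hence "1/exp(-L) \<le> 1/(1-L)" using assms by (intro divide_left_mono) auto
  thus ?thesis by (simp add: exp_minus inverse_eq_divide)
qed

lemma expm1_le: fixes L :: real shows "exp L - 1 \<le> L * exp L"
proof -
  have "1 - L \<le> exp (-L)" using exp_ge_add_one_self[of "-L"] by simp
  hence "(1 - L) * exp L \<le> exp (-L) * exp L" by (intro mult_right_mono) auto
  thus ?thesis by (simp add: algebra_simps exp_minus_inverse)
qed

lemma hfun_low: assumes "0 < L" "L \<le> 1/50" shows "0 \<le> hfun L"
proof -
  define z where "z = L * exp L"
  have z0: "0 \<le> z" using assms unfolding z_def by simp
  have "1/(1-L) \<le> 50/49" using assms by (simp add: field_simps)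
  hence eL: "exp L \<le> 50/49" using exp_le_inv1[of L] assms by linarith
  have eL1: "1 \<le> exp L" using assms by simp
  have a1: "(1+z)*ln(1+z)/L \<le> exp L + z*exp L"
  proof -
    have "ln (1+z) \<le> z" using z0 by (simp add: ln_add_one_self_le_self)
    hence "(1+z)*ln(1+z) \<le> (1+z)*z" using z0 by (intro mult_left_mono) auto
    hence "(1+z)*ln(1+z)/L \<le> (1+z)*z/L" using assms by (intro divide_right_mono) auto
    also have "\<dots> = exp L + z*exp L" unfolding z_def using assms by (simp add: field_simps)
    finally show ?thesis .
  qed
  have a2: "z*exp L - z \<le> L*L*exp L*exp L"
  proof -
    have "z*exp L - z = z*(exp L - 1)" by (simp add: algebra_simps)
    also have "\<dots> \<le> z*(L*exp L)" using expm1_le[of L] z0 by (intro mult_left_mono) auto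
    finally show ?thesis unfolding z_def by (simp add: algebra_simps)
  qed
  have a3: "L*L*exp L*exp L \<le> 1/2500 * (50/49)*(50/49)"
  proof -
    have "L*L \<le> (1/50)*(1/50)" using assms by (intro mult_mono) auto
    hence "L*L \<le> 1/2500" by simp
    moreover have "exp L*exp L \<le> (50/49)*(50/49)" using eL by (intro mult_mono) auto
    ultimately have "(L*L)*(exp L*exp L) \<le> 1/2500 * ((50/49)*(50/49))" using eL by (intro mult_mono) auto
    thus ?thesis by (simp add: algebra_simps)
  qed
  have lnL0: "ln L \<le> 0" using assms by simp
  have a4: "- (L*ln L) \<le> 1/10 + 8*L"
  proof -
    have "ln (1/(10*L)) \<le> 1/(10*L) - 1" using assms by (intro ln_le_minus_one) auto
    moreover have "ln (1/(10*L)) = - ln 10 - ln L" using assms by (simp add: ln_div ln_mult)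
    moreover have "ln (10::real) \<le> 9" using ln_le_minus_one[of 10] by simp
    ultimately have "- ln L \<le> 1/(10*L) + 8" by linarith
    hence "L * (- ln L) \<le> L * (1/(10*L) + 8)" using assms by (intro mult_left_mono) auto
    moreover have "L * (1/(10*L) + 8) = 1/10 + 8*L" using assms by (simp add: field_simps)
    moreover have "L * (- ln L) = - (L * ln L)" by simp
    ultimately show ?thesis by linarith
  qed
  have a5: "(exp L * L)*ln L \<le> (exp L - 1)*ln L"
    using expm1_le[of L] lnL0 by (intro mult_right_mono_neg) (auto simp: mult.commute)
  have a6: "exp L * (- (L*ln L)) \<le> 50/49 * (1/10 + 8*(1/50))"
  proof -
    have "- (L*ln L) \<le> 1/10 + 8*(1/50)" using a4 assms by linarith
    moreover have "0 \<le> - (L*ln L)" using assms lnL0 by (simp add: mult_nonneg_nonpos)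
    ultimately show ?thesis using eL by (intro mult_mono) auto
  qed
  have a7: "0 \<le> ln (1+L)" "0 \<le> exp (-L)/12" using assms by auto
  have h: "hfun L = 1 + c0 + exp (-L)/12 + ln (1+L) + (exp L - 1)*ln L + z - (1 + z)*ln (1 + z)/L"
    using hfun_alt[OF assms(1)] unfolding z_def .
  have "(exp L * L)*ln L = - (exp L * (- (L*ln L)))" by (simp add: algebra_simps)
  hence a8: "- (50/49 * (1/10 + 8*(1/50))) \<le> (exp L - 1)*ln L" using a5 a6 by linarith
  have a9: "-(50/49) - 1/2500*(50/49)*(50/49) \<le> z - (1+z)*ln(1+z)/L" using a1 a2 a3 eL by linarith
  have a10: "0 \<le> exp (-L)/12 + ln (1+L)" using a7 by linarith
  define P where "P = (exp L - 1)*ln L"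
  define Q where "Q = z - (1+z)*ln(1+z)/L"
  define R where "R = exp (-L)/12 + ln (1+L)"
  have hh: "hfun L = 1 + c0 + R + P + Q" unfolding h P_def Q_def R_def by (simp add: algebra_simps)
  have "-(50/49) - 1/2500*(50/49)*(50/49) \<le> Q" "- (50/49 * (1/10 + 8*(1/50))) \<le> P" "0 \<le> R"
    using a8 a9 a10 unfolding P_def Q_def R_def by auto
  thus ?thesis unfolding hh c0_def by (simp add: field_simps)
qed

lemma e_ge: "2718/1000 \<le> exp (1::real)"
  by (rule exp_ge_pt[where x="761/5000" and k=1]) (simp_all add: numdefs2)

lemma hfun_high: assumes "4 \<le> L" shows "0 \<le> hfun L"
proof -
  define z where "z = L * exp L"
  have L0: "L > 0" using assms by simp
  have eL: "5 \<le> exp L" using exp_ge_add_one_self[of L] assms by linarith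
  have z0: "0 < z" using L0 unfolding z_def by simp
  have b1: "(1+z)*ln (1+1/z)/L \<le> 1/L + 1/(z*L)"
  proof -
    have "ln (1+1/z) \<le> 1/z" using z0 by (intro ln_add_one_self_le_self) auto
    hence "(1+z)*ln(1+1/z) \<le> (1+z)*(1/z)" using z0 by (intro mult_left_mono) auto
    hence "(1+z)*ln(1+1/z)/L \<le> (1+z)*(1/z)/L" using L0 by (intro divide_right_mono) auto
    also have "\<dots> = 1/L + 1/(z*L)" using z0 L0 by (simp add: field_simps)
    finally show ?thesis .
  qed
  have b2: "1/(L+1) \<le> ln (1+L) - ln L"
  proof -
    have "ln ((L+1)/L) \<ge> 1 - L/(L+1)"
    proof -
      have "ln (L/(L+1)) \<le> L/(L+1) - 1" using L0 by (intro ln_le_minus_one) auto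
      moreover have "ln (L/(L+1)) = - ln ((L+1)/L)" using L0 by (simp add: ln_div)
      ultimately show ?thesis by linarith
    qed
    moreover have "1 - L/(L+1) = 1/(L+1)" using L0 by (simp add: field_simps)
    moreover have "ln ((L+1)/L) = ln (1+L) - ln L" using L0 by (simp add: ln_div add.commute)
    ultimately show ?thesis by linarith
  qed
  have b3: "ln L / L \<le> 1000/2718"
  proof -
    have "ln (L/exp 1) \<le> L/exp 1 - 1" using L0 by (intro ln_le_minus_one) auto
    moreover have "ln (L/exp 1) = ln L - 1" using L0 by (simp add: ln_div)
    ultimately have "ln L \<le> L/exp 1" by linarith
    also have "\<dots> \<le> L/(2718/1000)" using e_ge L0 by (intro divide_left_mono) auto
    finally have "ln L \<le> L*(1000/2718)" by simp
    thus ?thesis using L0 by (simp add: field_simps)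
  qed
  have b4: "1/(z*L) \<le> 1/80"
  proof -
    have "4*5 \<le> L*exp L" using eL assms by (intro mult_mono) auto
    hence "(4*5)*4 \<le> (L*exp L)*L" using assms eL by (intro mult_mono) auto
    hence "80 \<le> z*L" unfolding z_def by simp
    thus ?thesis by (simp add: field_simps)
  qed
  have b5: "1/L - 1/(L+1) \<le> 1/20"
  proof -
    have e: "1/L - 1/(L+1) = 1/(L*(L+1))" using L0 by (simp add: field_simps)
    have "4*5 \<le> L*(L+1)" using assms by (intro mult_mono) auto
    hence "1/(L*(L+1)) \<le> 1/(4*5)" by (intro divide_left_mono) auto
    thus ?thesis unfolding e by simp
  qed
  have "(1+1/L)*ln L = ln L + ln L / L" by (simp add: algebra_simps)
  moreover have "0 \<le> exp (-L)/12" by simp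
  ultimately show ?thesis unfolding hfun_def z_def[symmetric] c0_def using b1 b2 b3 b4 b5
    by linarith
qed


lemma hfun_nonneg: assumes "L > 0" shows "0 \<le> hfun L"
proof (cases "L \<le> 1/50")
  case True thus ?thesis using hfun_low assms by simp
next
  case False
  show ?thesis
  proof (cases "L \<le> 4")
    case True thus ?thesis using hfun_mid False by simp
  next
    case False thus ?thesis using hfun_high by simp
  qed
qed


lemma at3_ge: fixes x :: real assumes "0 \<le> x" "x < 1" shows "ln (1+x) - ln (1-x) \<le> 2*x + 2*x^3/(3*(1-x^2))"
proof -
  let ?f = "\<lambda>x. 2*x + 2*x^3/(3*(1-x^2)) - (ln (1+x) - ln (1-x))"
  have "?f 0 \<le> ?f x"
  proof (rule DERIV_nonneg_imp_nondecreasing[OF assms(1)])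
    fix t assume t: "0 \<le> t" "t \<le> x"
    hence t1: "t < 1" using assms by simp
    have tt: "t*t \<le> t*1" using t t1 by (intro mult_left_mono) auto
    have nz: "1+t \<noteq> 0" "1-t \<noteq> 0" "1 - t*t \<noteq> 0" "1 - t^2 \<noteq> 0" "3 - 3*t^2 \<noteq> 0" "3 - 3*(t*t) \<noteq> 0"
      using t t1 tt by (auto simp: power2_eq_square)
    have d0: "DERIV ?f t :> 2 + (6*t^2 * (3*(1-t^2)) + 2*t^3*(6*t))/((3*(1-t^2))^2) - (1/(1+t) + 1/(1-t))"
      apply (rule derivative_eq_intros refl | use nz t t1 in force)+
      by (simp add: power2_eq_square)
    have eq: "2 + (6*t^2 * (3*(1-t^2)) + 2*t^3*(6*t))/((3*(1-t^2))^2) - (1/(1+t) + 1/(1-t)) = 4*t^4/(3*(1-t^2)^2)"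
    proof -
      obtain d where hd: "d = 1 - t^2" by blast
      have dnz: "d \<noteq> 0" using nz hd by simp
      have h1: "1/(1+t) + 1/(1-t) = 2/d" using nz hd by (simp add: field_simps power2_eq_square)
      have "2 + (6*t^2 * (3*d) + 2*t^3*(6*t))/((3*d)^2) - 2/d = 4*t^4/(3*d^2)"
        using dnz apply (simp add: field_simps power2_eq_square)
        unfolding hd by algebra
      thus ?thesis using h1 hd by simp
    qed
    have d: "DERIV ?f t :> 4*t^4/(3*(1-t^2)^2)" using d0 eq by simp
    moreover have "0 \<le> 4*t^4/(3*(1-t^2)^2)" by simp
    ultimately show "\<exists>y. DERIV ?f t :> y \<and> 0 \<le> y" by auto
  qed
  thus ?thesis by simp
qed

lemma lnq_eq: fixes y :: real assumes "y > 0"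
  shows "ln (1 + 1/(2*y+1)) - ln (1 - 1/(2*y+1)) = ln (y+1) - ln y"
proof -
  have e1: "1 + 1/(2*y+1) = (2*(y+1))/(2*y+1)" "1 - 1/(2*y+1) = (2*y)/(2*y+1)" using assms by (auto simp: field_simps)
  have l1: "ln ((2*(y+1))/(2*y+1)) = ln (2*(y+1)) - ln (2*y+1)" using assms by (intro ln_divide_pos) auto
  have l2: "ln ((2*y)/(2*y+1)) = ln (2*y) - ln (2*y+1)" using assms by (intro ln_divide_pos) auto
  have l3: "ln (2*(y+1)) = ln 2 + ln (y+1)" using assms by (intro ln_mult_pos) auto
  have l4: "ln (2*y) = ln 2 + ln y" using assms by (intro ln_mult_pos) auto
  show ?thesis unfolding e1 l1 l2 l3 l4 by simp
qed

lemma trap: fixes y :: real assumes "y > 0" shows "1 \<le> (y + 1/2) * (ln (y+1) - ln y)"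
proof -
  let ?x = "1/(2*y+1)"
  have x: "0 \<le> ?x" "?x < 1" using assms by (auto simp: field_simps)
  have "2*?x \<le> atlo ?x" using x unfolding atlo_def by simp
  hence "2*?x \<le> ln (y+1) - ln y" using atlo_le[OF x] lnq_eq[OF assms] by linarith
  hence "(y+1/2)*(2*?x) \<le> (y+1/2)*(ln (y+1) - ln y)" using assms by (intro mult_left_mono) auto
  moreover have "(y+1/2)*(2*?x) = 1" using assms by (simp add: field_simps)
  ultimately show ?thesis by linarith
qed

lemma stir_step: fixes y :: real assumes "y > 0" shows "(y + 1/2) * (ln (y+1) - ln y) \<le> 1 + 1/(12*y*(y+1))"
proof -
  let ?x = "1/(2*y+1)"
  have x: "0 \<le> ?x" "?x < 1" using assms by (auto simp: field_simps)
  have a: "ln (y+1) - ln y \<le> 2*?x + 2*?x^3/(3*(1-?x^2))" using at3_ge[OF x] lnq_eq[OF assms] by simp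
  have "(y+1/2) * (ln (y+1) - ln y) \<le> (y+1/2)*(2*?x + 2*?x^3/(3*(1-?x^2)))"
    using a assms by (intro mult_left_mono) auto
  also have "\<dots> = 1 + 1/(12*y*(y+1))"
  proof -
    define s where "s = 2*y+1"
    have s1: "s > 1" using assms unfolding s_def by simp
    have nz: "s \<noteq> 0" "s^2 - 1 \<noteq> 0" "s*s - 1 \<noteq> 0" using s1 by (auto simp: power2_eq_square) (smt (verit) mult_less_cancel_right2)+
    have xs: "?x = 1/s" unfolding s_def by simp
    have yh: "y + 1/2 = s/2" unfolding s_def by simp
    have q: "s^2 - 1 = 4*y*(y+1)" unfolding s_def by (simp add: algebra_simps power2_eq_square)
    have "(s/2)*(2*(1/s) + 2*(1/s)^3/(3*(1-(1/s)^2))) = 1 + 1/(3*(s^2-1))"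
      using nz by (simp add: field_simps power2_eq_square power3_eq_cube)
    thus ?thesis unfolding xs yh q by (simp add: field_simps)
  qed
  finally show ?thesis .
qed

lemma stirling_lower: assumes "k \<ge> 1"
  shows "(real k + 1/2) * ln (real k) - real k + 11/12 + 1/(12*real k) \<le> ln (fact k)"
  using assms
proof (induction k rule: dec_induct)
  case base thus ?case by simp
next
  case (step k)
  have k0: "real k > 0" using step by simp
  have s: "(real k + 1/2) * (ln (real k+1) - ln (real k)) \<le> 1 + 1/(12*real k*(real k+1))"
    using stir_step[OF k0] .
  have f: "ln (fact (Suc k)) = ln (real k + 1) + ln (fact k)"
    by (simp add: ln_mult add.commute)
  have e: "1/(12*real k) - 1/(12*(real k + 1)) = 1/(12*real k*(real k+1))" using k0 by (simp add: field_simps)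
  show ?case using step.IH s f e by (simp add: algebra_simps)
qed



lemma seen_Suc: "seen x (Suc t) = insert (x (Suc t)) (seen x t)"
  unfolding seen_def by (auto simp: atLeastAtMostSuc_conv)

lemma cnt_Suc: "cnt x (Suc t) i = cnt x t i + (if x (Suc t) = i then 1 else 0)"
proof -
  have "{s \<in> {1..Suc t}. x s = i} = {s \<in> {1..t}. x s = i} \<union> (if x (Suc t) = i then {Suc t} else {})"
    by (auto simp: atLeastAtMostSuc_conv)
  thus ?thesis unfolding cnt_def by (auto simp: card_insert_if)
qed

lemma cnt_pos_iff: "cnt x t i > 0 \<longleftrightarrow> i \<in> seen x t"
  unfolding cnt_def seen_def by (auto simp: card_gt_0_iff)

lemma finite_seen: "finite (seen x t)" unfolding seen_def by simp

lemma sum_cnt: "(\<Sum>j\<in>seen x n. real (cnt x n j)) = real n"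
proof (induction n)
  case 0 thus ?case by (simp add: seen_def)
next
  case (Suc n)
  let ?i = "x (Suc n)"
  show ?case
  proof (cases "?i \<in> seen x n")
    case True
    hence s: "seen x (Suc n) = seen x n" by (auto simp: seen_Suc)
    have "(\<Sum>j\<in>seen x n. real (cnt x (Suc n) j)) = (\<Sum>j\<in>seen x n. real (cnt x n j) + (if j = ?i then 1 else 0))"
      by (intro sum.cong) (auto simp: cnt_Suc)
    also have "\<dots> = real n + 1" using True finite_seen[of x n] Suc.IH by (simp add: sum.distrib)
    finally show ?thesis using s by simp
  next
    case False
    have s: "seen x (Suc n) = insert ?i (seen x n)" by (simp add: seen_Suc)
    have c0: "cnt x n ?i = 0" using False cnt_pos_iff[of x n ?i] by simp
    have "(\<Sum>j\<in>seen x n. real (cnt x (Suc n) j)) = (\<Sum>j\<in>seen x n. real (cnt x n j))"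
      using False by (intro sum.cong) (auto simp: cnt_Suc)
    thus ?thesis using s False finite_seen[of x n] Suc.IH c0 by (simp add: cnt_Suc)
  qed
qed

lemma CL_Suc: "CL w x (Suc n) = CL w x n + (if x (Suc n) \<notin> seen x n then ln (1 / w n (x (Suc n))) else 0)"
proof -
  have e: "{t. t < Suc n \<and> x (t + 1) \<notin> seen x t} = {t. t < n \<and> x (t + 1) \<notin> seen x t} \<union> (if x (Suc n) \<notin> seen x n then {n} else {})"
    by (auto simp: less_Suc_eq)
  have f: "finite {t. t < n \<and> x (t + 1) \<notin> seen x t}" by simp
  show ?thesis unfolding CL_def e using f by (auto simp: sum.insert)
qed

lemma ln_fact_Suc: "ln (fact (Suc c) :: real) = ln (real (Suc c)) + ln (fact c)"
  by (simp add: ln_mult)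

lemma lnS:
  assumes b: "\<beta> > 0" and w: "\<And>t. t < n \<Longrightarrow> x (t+1) \<notin> seen x t \<Longrightarrow> w t (x (t+1)) > 0"
  shows "S_seq \<beta> w x n > 0 \<and> ln (S_seq \<beta> w x n) = (\<Sum>t<n. - ln (real t + \<beta>)) + real (card (seen x n)) * ln \<beta>
            - CL w x n + (\<Sum>j\<in>seen x n. ln (fact (cnt x n j - 1)))"
  using w
proof (induction n)
  case 0 thus ?case by (simp add: S_seq_def seen_def CL_def)
next
  case (Suc n)
  let ?i = "x (Suc n)"
  have IH: "S_seq \<beta> w x n > 0" "ln (S_seq \<beta> w x n) = (\<Sum>t<n. - ln (real t + \<beta>)) + real (card (seen x n)) * ln \<beta>
            - CL w x n + (\<Sum>j\<in>seen x n. ln (fact (cnt x n j - 1)))" using Suc by auto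
  have Sq: "S_seq \<beta> w x (Suc n) = S_seq \<beta> w x n * S_cond \<beta> w x n ?i" by (simp add: S_seq_def)
  have nb: "real n + \<beta> > 0" using b by simp
  show ?case
  proof (cases "?i \<in> seen x n")
    case True
    have c: "cnt x n ?i > 0" using True cnt_pos_iff[of x n ?i] by simp
    have sc: "S_cond \<beta> w x n ?i = real (cnt x n ?i) / (real n + \<beta>)" using c by (simp add: S_cond_def)
    have scp: "S_cond \<beta> w x n ?i > 0" using sc c nb by simp
    have s: "seen x (Suc n) = seen x n" using True by (auto simp: seen_Suc)
    have cl: "CL w x (Suc n) = CL w x n" using True by (simp add: CL_Suc)
    have fs: "(\<Sum>j\<in>seen x n. ln (fact (cnt x (Suc n) j - 1))) = (\<Sum>j\<in>seen x n. ln (fact (cnt x n j - 1))) + ln (real (cnt x n ?i))"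
    proof -
      have "(\<Sum>j\<in>seen x n. ln (fact (cnt x (Suc n) j - 1))) = (\<Sum>j\<in>seen x n. ln (fact (cnt x n j - 1)) + (if j = ?i then ln (real (cnt x n ?i)) else 0))"
      proof (intro sum.cong refl)
        fix j assume "j \<in> seen x n"
        show "ln (fact (cnt x (Suc n) j - 1)) = ln (fact (cnt x n j - 1)) + (if j = ?i then ln (real (cnt x n ?i)) else 0)"
        proof (cases "j = ?i")
          case True
          then obtain c' where "cnt x n ?i = Suc c'" using c by (cases "cnt x n ?i") auto
          thus ?thesis using True by (simp add: cnt_Suc ln_mult)
        qed (simp add: cnt_Suc)
      qed
      also have "\<dots> = (\<Sum>j\<in>seen x n. ln (fact (cnt x n j - 1))) + ln (real (cnt x n ?i))"
        using True finite_seen[of x n] by (simp add: sum.distrib)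
      finally show ?thesis .
    qed
    have "ln (S_seq \<beta> w x (Suc n)) = ln (S_seq \<beta> w x n) + ln (real (cnt x n ?i)) - ln (real n + \<beta>)"
      unfolding Sq using IH(1) scp sc c nb by (simp add: ln_mult ln_div)
    thus ?thesis using IH scp Sq s cl fs by (simp add: algebra_simps)
  next
    case False
    have c: "cnt x n ?i = 0" using False cnt_pos_iff[of x n ?i] by simp
    have wp: "w n ?i > 0" using Suc.prems[of n] False by simp
    have sc: "S_cond \<beta> w x n ?i = \<beta> * w n ?i / (real n + \<beta>)" using c by (simp add: S_cond_def)
    have scp: "S_cond \<beta> w x n ?i > 0" using sc wp nb b by simp
    have s: "seen x (Suc n) = insert ?i (seen x n)" by (simp add: seen_Suc)
    have cd: "card (seen x (Suc n)) = Suc (card (seen x n))" using s False finite_seen[of x n] by simp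
    have cl: "CL w x (Suc n) = CL w x n - ln (w n ?i)" using False wp by (simp add: CL_Suc ln_div)
    have fs: "(\<Sum>j\<in>seen x (Suc n). ln (fact (cnt x (Suc n) j - 1))) = (\<Sum>j\<in>seen x n. ln (fact (cnt x n j - 1)))"
    proof -
      have "(\<Sum>j\<in>seen x (Suc n). ln (fact (cnt x (Suc n) j - 1))) = ln (fact (cnt x (Suc n) ?i - 1)) + (\<Sum>j\<in>seen x n. ln (fact (cnt x (Suc n) j - 1)))"
        unfolding s using False finite_seen[of x n] by simp
      also have "(\<Sum>j\<in>seen x n. ln (fact (cnt x (Suc n) j - 1))) = (\<Sum>j\<in>seen x n. ln (fact (cnt x n j - 1)))"
        using False by (intro sum.cong) (auto simp: cnt_Suc)
      finally show ?thesis using c by (simp add: cnt_Suc)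
    qed
    have l1: "ln (S_seq \<beta> w x (Suc n)) = ln (S_seq \<beta> w x n) + ln \<beta> + ln (w n ?i) - ln (real n + \<beta>)"
      unfolding Sq using IH(1) scp sc wp nb b by (simp add: ln_mult ln_div)
    have sumS: "(\<Sum>t<Suc n. - ln (real t + \<beta>)) = (\<Sum>t<n. - ln (real t + \<beta>)) - ln (real n + \<beta>)" by simp
    have cdr: "real (card (seen x (Suc n))) * ln \<beta> = real (card (seen x n)) * ln \<beta> + ln \<beta>"
      using cd by (simp add: algebra_simps)
    have "S_seq \<beta> w x (Suc n) > 0" using Sq IH(1) scp by simp
    moreover have "ln (S_seq \<beta> w x (Suc n)) = (\<Sum>t<Suc n. - ln (real t + \<beta>)) + real (card (seen x (Suc n))) * ln \<beta>
            - CL w x (Suc n) + (\<Sum>j\<in>seen x (Suc n). ln (fact (cnt x (Suc n) j - 1)))"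
      unfolding sumS cdr fs cl l1 IH(2) by simp
    ultimately show ?thesis by blast
  qed
qed


lemma ident:
  fixes m L E lm lL l1z l1L :: real
  assumes "L \<noteq> 0" "E \<noteq> 0" "m \<noteq> 0"
  shows "(-(m-1/2)*lm - (lm+L)/2 + m*l1L + 56/100*m + 82/1000)
     - (-(m*E)*(lm+L) + m*E - 11/12*m - m^2/(12*(m*E)) - m*(lm-lL) + ((m*E+m/L-1/2)*(lm+l1z-lL) - (m/L-1/2)*(lm-lL) - m*E))
     = m*((56/100-1/12) + 1/(12*E) + l1L - (1+1/L)*lL - (1+L*E)*(l1z-lL-L)/L) + 82/1000 + (l1z-L)/2"
  using assms by (simp add: field_simps power2_eq_square)

lemma main_ineq:
  fixes m n :: real
  assumes m1: "1 \<le> m" and mn: "m < n" and hL: "0 \<le> hfun (ln (n/m))"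
  shows "-n*ln n + n - 11/12*m - m^2/(12*n) - m*ln (m / ln (n/m))
           + ((n + m / ln (n/m) - 1/2)*ln (n + m / ln (n/m)) - (m / ln (n/m) - 1/2)*ln (m / ln (n/m)) - n)
         \<le> -(m-1/2)*ln m - ln n/2 + m*ln (ln (exp 1*n/m)) + 0.56*m + 0.082"
proof -
  define L where "L = ln (n/m)"
  define E where "E = exp L"
  define z where "z = L*E"
  have m0: "m > 0" using m1 by simp
  have n0: "n > 0" using m0 mn by simp
  have L0: "L > 0" unfolding L_def using m0 mn by simp
  have E0: "E > 0" unfolding E_def by simp
  have En: "n = m*E" unfolding E_def L_def using m0 n0 by simp
  have z0: "z > 0" unfolding z_def using L0 E0 by simp
  have lnn: "ln n = ln m + L" unfolding En E_def using m0 by (simp add: ln_mult)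
  have lnb: "ln (m/L) = ln m - ln L" using m0 L0 by (simp add: ln_div)
  have nb: "n + m/L = m*(1+z)/L" unfolding En z_def using L0 by (simp add: field_simps)
  have lnnb: "ln (n + m/L) = ln m + ln (1+z) - ln L" unfolding nb using m0 L0 z0 by (simp add: ln_mult ln_div)
  have lnl: "ln (ln (exp 1*n/m)) = ln (1+L)"
  proof -
    have "exp 1*n/m = exp (1+L)" unfolding En E_def using m0 by (simp add: exp_add)
    thus ?thesis by simp
  qed
  have hz: "hfun L = (56/100-1/12) + 1/(12*E) + ln (1+L) - (1+1/L)*ln L - (1+L*E)*(ln (1+z) - ln L - L)/L"
  proof -
    have "1 + 1/z = (1+z)/z" using z0 by (simp add: field_simps)
    hence "ln (1 + 1/z) = ln (1+z) - ln z" using z0 by (simp add: ln_div)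
    moreover have "ln z = ln L + L" unfolding z_def E_def using L0 by (simp add: ln_mult)
    ultimately have eq1: "ln (1 + 1/(L*E)) = ln (1+z) - ln L - L" unfolding z_def by simp
    have eq2: "exp (-L) = 1/E" unfolding E_def by (simp add: exp_minus inverse_eq_divide)
    have "hfun L = c0 + exp (-L)/12 + ln (1+L) - (1+1/L)*ln L - (1 + L*E)*ln (1 + 1/(L*E))/L"
      by (simp add: hfun_def E_def)
    also have "\<dots> = (56/100-1/12) + 1/(12*E) + ln (1+L) - (1+1/L)*ln L - (1+L*E)*(ln (1+z) - ln L - L)/L"
      unfolding eq1 eq2 c0_def by simp
    finally show ?thesis .
  qed
  have lz: "0 \<le> ln (1+z) - L"
  proof -
    have "1 - L \<le> exp (-L)" using exp_ge_add_one_self[of "-L"] by simp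
    hence "1 \<le> L + exp (-L)" by simp
    hence "0 \<le> ln (L + exp (-L))" by simp
    moreover have "L + exp (-L) = (1+z)/E" unfolding z_def E_def by (simp add: field_simps exp_minus)
    ultimately show ?thesis using z0 E0 by (simp add: ln_div E_def)
  qed
  have id: "(-(m-1/2)*ln m - (ln m+L)/2 + m*ln (1+L) + 56/100*m + 82/1000)
     - (-(m*E)*(ln m+L) + m*E - 11/12*m - m^2/(12*(m*E)) - m*(ln m-ln L) + ((m*E+m/L-1/2)*(ln m+ln (1+z)-ln L) - (m/L-1/2)*(ln m-ln L) - m*E))
     = m*((56/100-1/12) + 1/(12*E) + ln (1+L) - (1+1/L)*ln L - (1+L*E)*(ln (1+z)-ln L-L)/L) + 82/1000 + (ln (1+z)-L)/2"
    by (rule ident) (use L0 E0 m0 in auto)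
  have "0 \<le> m * hfun L" using hL m0 unfolding L_def by simp
  hence "0 \<le> (-(m-1/2)*ln m - (ln m+L)/2 + m*ln (1+L) + 56/100*m + 82/1000)
     - (-(m*E)*(ln m+L) + m*E - 11/12*m - m^2/(12*(m*E)) - m*(ln m-ln L) + ((m*E+m/L-1/2)*(ln m+ln (1+z)-ln L) - (m/L-1/2)*(ln m-ln L) - m*E))"
    unfolding id hz using lz by simp
  thus ?thesis unfolding L_def[symmetric] lnb lnnb lnl lnn En[symmetric] by simp
qed




definition Phi :: "real \<Rightarrow> real" where "Phi y = (y - 1/2)*ln y - y"

lemma sum_ln_le: assumes "\<beta> > 0" shows "(\<Sum>t<n. ln (real t + \<beta>)) \<le> Phi (real n + \<beta>) - Phi \<beta>"
proof (induction n)
  case 0 thus ?case by simp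
next
  case (Suc n)
  let ?y = "real n + \<beta>"
  have y0: "?y > 0" using assms by simp
  have "1 \<le> (?y + 1/2) * (ln (?y+1) - ln ?y)" using trap[OF y0] .
  hence st: "ln ?y \<le> Phi (?y + 1) - Phi ?y" unfolding Phi_def by (simp add: algebra_simps)
  have e: "real (Suc n) + \<beta> = ?y + 1" by simp
  show ?case unfolding sum.lessThan_Suc e using Suc.IH st by linarith
qed

lemma recip_sum: fixes A :: "'b set" and c :: "'b \<Rightarrow> real"
  assumes "finite A" "\<And>j. j \<in> A \<Longrightarrow> c j > 0" "(\<Sum>j\<in>A. c j) = n" "card A = m" "m > 0" "n > 0"
  shows "m^2/n \<le> (\<Sum>j\<in>A. 1 / c j)"
proof -
  define k where "k = n/m"
  have k0: "k > 0" unfolding k_def using assms by simp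
  have t: "2/k - c j/k^2 \<le> 1/c j" if "j \<in> A" for j
  proof -
    have cj: "c j > 0" using assms(2) that by simp
    have "0 \<le> (c j - k)^2" by simp
    hence "0 \<le> ((c j - k)^2)/(c j * k^2)" using cj k0 by simp
    moreover have "((c j - k)^2)/(c j * k^2) = 1/c j - (2/k - c j/k^2)" using cj k0
      by (simp add: field_simps power2_eq_square)
    ultimately show ?thesis by simp
  qed
  have "(\<Sum>j\<in>A. 2/k - c j/k^2) \<le> (\<Sum>j\<in>A. 1/c j)" using t by (intro sum_mono) auto
  moreover have "(\<Sum>j\<in>A. 2/k - c j/k^2) = m*(2/k) - n/k^2"
    using assms by (simp add: sum_subtractf sum_divide_distrib[symmetric])
  moreover have "m*(2/k) - n/k^2 = m^2/n" unfolding k_def using assms by (simp add: field_simps power2_eq_square)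
  ultimately show ?thesis by simp
qed

lemma lnprod: assumes "n \<ge> 1"
  shows "ln (real n powi (- int n) * (\<Prod>j\<in>seen x n. real (cnt x n j) ^ cnt x n j))
       = - real n * ln (real n) + (\<Sum>j\<in>seen x n. real (cnt x n j) * ln (real (cnt x n j)))"
proof -
  have cp: "j \<in> seen x n \<Longrightarrow> cnt x n j > 0" for j using cnt_pos_iff[of x n j] by simp
  have p1: "real n powi (- int n) = inverse (real n ^ n)" by (simp add: power_int_minus)
  have pp: "0 < (\<Prod>j\<in>seen x n. real (cnt x n j) ^ cnt x n j)" using cp by (intro prod_pos) auto
  have n0: "0 < real n" using assms by simp
  have "ln (real n powi (- int n) * (\<Prod>j\<in>seen x n. real (cnt x n j) ^ cnt x n j))
      = ln (inverse (real n ^ n)) + ln (\<Prod>j\<in>seen x n. real (cnt x n j) ^ cnt x n j)"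
    unfolding p1 using pp n0 by (intro ln_mult_pos) auto
  also have "ln (inverse (real n ^ n)) = - real n * ln (real n)" by (simp add: ln_inverse ln_realpow)
  also have "ln (\<Prod>j\<in>seen x n. real (cnt x n j) ^ cnt x n j) = (\<Sum>j\<in>seen x n. ln (real (cnt x n j) ^ cnt x n j))"
    using cp finite_seen[of x n] by (intro ln_prod) auto
  also have "\<dots> = (\<Sum>j\<in>seen x n. real (cnt x n j) * ln (real (cnt x n j)))"
    by (intro sum.cong refl) (simp add: ln_realpow)
  finally show ?thesis .
qed

lemma per_sym: assumes "k \<ge> 1"
  shows "real k * ln (real k) - ln (fact (k - 1)) \<le> ln (real k)/2 + real k - 11/12 - 1/(12*real k)"
proof -
  have s: "(real k + 1/2) * ln (real k) - real k + 11/12 + 1/(12*real k) \<le> ln (fact k)" using stirling_lower[OF assms] .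
  obtain k' where k: "k = Suc k'" using assms by (cases k) auto
  have "ln (fact k :: real) = ln (real k) + ln (fact (k - 1))" unfolding k by (simp add: ln_mult)
  thus ?thesis using s by (simp add: algebra_simps)
qed

theorem theorem4:
  fixes X :: "'a set" and x :: "nat \<Rightarrow> 'a" and w :: "nat \<Rightarrow> 'a \<Rightarrow> real" and n :: nat
  assumes "finite X"
    and "n \<ge> 1"
    and "\<And>t. t \<in> {1..n} \<Longrightarrow> x t \<in> X"
    and "\<And>t i. t \<le> n \<Longrightarrow> i \<in> X - seen x t \<Longrightarrow> w t i > 0"
    and "\<And>t. t \<le> n \<Longrightarrow> (\<Sum>k\<in>X - seen x t. w t k) \<le> 1"
  shows "let m = card (seen x n);
             R = (if m < n then redundancy x n (S_seq (real m / ln (real n / real m)) w x n)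
                  else redundancy x n (S_inf_seq w x n))
         in R \<le> CL w x n - (real m - 1/2) * ln (real m)
                 + (\<Sum>j\<in>seen x n. ln (real (cnt x n j)) / 2) - ln (real n) / 2
                 + real m * ln (ln (exp 1 * real n / real m)) + 0.56 * real m + 0.082"
proof -
  define m where "m = card (seen x n)"
  define A where "A = seen x n"
  have fin: "finite A" unfolding A_def by (rule finite_seen)
  have cp: "j \<in> A \<Longrightarrow> cnt x n j > 0" for j unfolding A_def using cnt_pos_iff[of x n j] by simp
  have mn: "m \<le> n" unfolding m_def seen_def using card_image_le[of "{1..n}" x] by simp
  have m1: "m \<ge> 1"
  proof -
    have "x 1 \<in> seen x n" unfolding seen_def using assms(2) by auto
    hence "A \<noteq> {}" unfolding A_def by auto
    thus ?thesis unfolding m_def A_def[symmetric] using fin by (simp add: Suc_le_eq card_gt_0_iff)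
  qed
  have sumc: "(\<Sum>j\<in>A. real (cnt x n j)) = real n" unfolding A_def by (rule sum_cnt)
  have wpos: "w t (x (t+1)) > 0" if "t < n" "x (t+1) \<notin> seen x t" for t
  proof -
    have "x (t+1) \<in> X" using assms(3)[of "t+1"] that by simp
    thus ?thesis using assms(4)[of t "x (t+1)"] that by simp
  qed
  have lp: "ln (real n powi (- int n) * (\<Prod>j\<in>seen x n. real (cnt x n j) ^ cnt x n j))
       = - real n * ln (real n) + (\<Sum>j\<in>A. real (cnt x n j) * ln (real (cnt x n j)))"
    unfolding A_def using lnprod[OF assms(2)] .
  show ?thesis
  proof (cases "m < n")
    case True
    define L where "L = ln (real n / real m)"
    define \<beta> where "\<beta> = real m / L"
    have mr: "1 \<le> real m" "real m < real n" using m1 True by auto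
    have L0: "L > 0" unfolding L_def using mr by simp
    have b0: "\<beta> > 0" unfolding \<beta>_def using L0 mr by simp
    have S: "S_seq \<beta> w x n > 0 \<and> ln (S_seq \<beta> w x n) = (\<Sum>t<n. - ln (real t + \<beta>)) + real (card (seen x n)) * ln \<beta>
            - CL w x n + (\<Sum>j\<in>seen x n. ln (fact (cnt x n j - 1)))"
      using lnS[OF b0, of n x w] wpos by blast
    have R: "redundancy x n (S_seq \<beta> w x n) = - real n * ln (real n) + (\<Sum>j\<in>A. real (cnt x n j) * ln (real (cnt x n j)))
              + (\<Sum>t<n. ln (real t + \<beta>)) - real m * ln \<beta> + CL w x n - (\<Sum>j\<in>A. ln (fact (cnt x n j - 1)))"
      unfolding redundancy_def lp using S unfolding m_def A_def by (simp add: sum_negf)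
    have per: "(\<Sum>j\<in>A. real (cnt x n j) * ln (real (cnt x n j)) - ln (fact (cnt x n j - 1)))
        \<le> (\<Sum>j\<in>A. ln (real (cnt x n j))/2 + real (cnt x n j) - 11/12 - 1/(12*real (cnt x n j)))"
      using cp per_sym by (intro sum_mono) (simp add: Suc_le_eq)
    have per2: "(\<Sum>j\<in>A. ln (real (cnt x n j))/2 + real (cnt x n j) - 11/12 - 1/(12*real (cnt x n j)))
        = (\<Sum>j\<in>A. ln (real (cnt x n j))/2) + real n - 11/12 * real m - (\<Sum>j\<in>A. 1/real (cnt x n j))/12"
    proof -
      have h12: "(\<Sum>j\<in>A. 1/(12*real (cnt x n j))) = (\<Sum>j\<in>A. 1/real (cnt x n j))/12"
        unfolding sum_divide_distrib by (intro sum.cong) auto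
      have h2: "(\<Sum>j\<in>A. ln (real (cnt x n j))/2 + real (cnt x n j) - 11/12 - 1/(12*real (cnt x n j)))
         = (\<Sum>j\<in>A. ln (real (cnt x n j))/2) + (\<Sum>j\<in>A. real (cnt x n j)) - (\<Sum>j\<in>A. 11/12) - (\<Sum>j\<in>A. 1/(12*real (cnt x n j)))"
        by (simp add: sum.distrib sum_subtractf)
      show ?thesis unfolding h2 h12 sumc using fin unfolding m_def A_def[symmetric] by simp
    qed
    have rs: "real m ^ 2 / real n \<le> (\<Sum>j\<in>A. 1 / real (cnt x n j))"
      using recip_sum[OF fin, where c="\<lambda>j. real (cnt x n j)" and n="real n" and m=m] cp sumc mr unfolding m_def A_def
      by simp
    have sl: "(\<Sum>t<n. ln (real t + \<beta>)) \<le> Phi (real n + \<beta>) - Phi \<beta>" using sum_ln_le[OF b0] .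
    have mi: "- real n * ln (real n) + real n - 11/12 * real m - (real m)^2/(12 * real n) - real m * ln \<beta>
           + ((real n + \<beta> - 1/2) * ln (real n + \<beta>) - (\<beta> - 1/2) * ln \<beta> - real n)
         \<le> - (real m - 1/2) * ln (real m) - ln (real n)/2 + real m * ln (ln (exp 1 * real n / real m)) + 0.56 * real m + 0.082"
      using main_ineq[OF mr hfun_nonneg[OF L0[unfolded L_def]]] unfolding \<beta>_def L_def by simp
    have "redundancy x n (S_seq \<beta> w x n) \<le> CL w x n - (real m - 1/2) * ln (real m)
                 + (\<Sum>j\<in>seen x n. ln (real (cnt x n j)) / 2) - ln (real n) / 2
                 + real m * ln (ln (exp 1 * real n / real m)) + 0.56 * real m + 0.082"
    proof -
      have "(\<Sum>j\<in>A. real (cnt x n j) * ln (real (cnt x n j))) - (\<Sum>j\<in>A. ln (fact (cnt x n j - 1)))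
          \<le> (\<Sum>j\<in>A. ln (real (cnt x n j))/2) + real n - 11/12 * real m - (\<Sum>j\<in>A. 1/real (cnt x n j))/12"
        using per per2 by (simp add: sum_subtractf)
      moreover have "(\<Sum>j\<in>A. ln (real (cnt x n j)) / 2) = (\<Sum>j\<in>seen x n. ln (real (cnt x n j)) / 2)" unfolding A_def ..
      moreover have "(real m)^2/(12 * real n) \<le> (\<Sum>j\<in>A. 1/real (cnt x n j))/12" using rs by simp
      ultimately show ?thesis using R sl mi unfolding Phi_def by linarith
    qed
    thus ?thesis using True unfolding m_def[symmetric] \<beta>_def L_def Let_def by simp
  next
    case False
    hence mN: "m = n" using mn by simp
    have inj: "inj_on x {1..n}" using mN unfolding m_def seen_def by (intro eq_card_imp_inj_on) auto
    have new: "x (t+1) \<notin> seen x t" if "t < n" for t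
    proof
      assume "x (t+1) \<in> seen x t"
      then obtain s where s: "s \<in> {1..t}" "x s = x (t+1)" unfolding seen_def by auto
      have "s \<in> {1..n}" "t+1 \<in> {1..n}" using s that by auto
      hence "s = t+1" using inj s(2) unfolding inj_on_def by blast
      thus False using s by simp
    qed
    have c1: "cnt x n j = 1" if jA: "j \<in> seen x n" for j
    proof -
      obtain s where s: "s \<in> {1..n}" "j = x s" using jA unfolding seen_def by auto
      have "{s' \<in> {1..n}. x s' = j} = {s}"
      proof (intro equalityI subsetI)
        fix s' assume "s' \<in> {s' \<in> {1..n}. x s' = j}"
        hence "s' \<in> {1..n}" "x s' = x s" using s by auto
        thus "s' \<in> {s}" using inj s(1) by (simp add: inj_on_eq_iff)
      qed (use s in auto)
      thus ?thesis unfolding cnt_def by simp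
    qed
    have ct0: "cnt x t (x (t+1)) = 0" if "t < n" for t using new[OF that] cnt_pos_iff[of x t "x (t+1)"] by simp
    have Sinf: "S_inf_seq w x n = (\<Prod>t<n. w t (x (t+1)))"
      unfolding S_inf_seq_def S_inf_cond_def using ct0 by (intro prod.cong) auto
    have lnS: "ln (S_inf_seq w x n) = (\<Sum>t<n. ln (w t (x (t+1))))"
      unfolding Sinf using wpos new by (intro ln_prod) (auto simp: less_imp_neq[symmetric])
    have CLe: "CL w x n = - (\<Sum>t<n. ln (w t (x (t+1))))"
    proof -
      have "{t. t < n \<and> x (t + 1) \<notin> seen x t} = {..<n}" using new by auto
      moreover have "(\<Sum>t\<in>{..<n}. ln (1 / w t (x (t + 1)))) = (\<Sum>t<n. - ln (w t (x (t+1))))"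
        using wpos new by (intro sum.cong refl) (auto simp: ln_div)
      ultimately show ?thesis unfolding CL_def by (simp add: sum_negf)
    qed
    have sl: "(\<Sum>j\<in>A. real (cnt x n j) * ln (real (cnt x n j))) = 0" using c1 unfolding A_def by simp
    have sl2: "(\<Sum>j\<in>seen x n. ln (real (cnt x n j)) / 2) = 0" using c1 by simp
    have "redundancy x n (S_inf_seq w x n) = - real n * ln (real n) + CL w x n"
      unfolding redundancy_def lp lnS CLe sl by simp
    moreover have "ln (ln (exp 1 * real n / real n)) = 0" using assms(2) by simp
    ultimately show ?thesis using False mN sl2 unfolding m_def[symmetric] Let_def by (simp add: algebra_simps)
  qed
qed


end
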